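(* For every regular language $T\subseteq(\Sigma\cup\Gamma)^*$ of finite shiftlag, the set $\mathit{minsync}(T,T)$ is regular.
   Context: $\Sigma,\Gamma$ are disjoint finite alphabets. For $w\in(\Sigma\cup\Gamma)^*$, $\llbracket w\rrbracket=(\pi_{\mathtt i}(w),\pi_{\mathtt o}(w))$ where $\pi_{\mathtt i}$ (resp. $\pi_{\mathtt o}$) deletes all letters of $\Gamma$ (resp. $\Sigma$), and $\llbracket L\rrbracket=\{\llbracket w\rrbracket:w\in L\}$. A position $i$ of $w$ is $\geq k$-lagged if the absolute difference between the numbers of $\Sigma$-letters and $\Gamma$-letters in $w[1..i]$ is at least $k$. A shift of $w$ is a position $i\in\{1,\dots,|w|-1\}$ with exactly one of $w[i],w[i+1]$ in $\Sigma$; shifts $i<j$ are consecutive if no shift lies strictly between them. $\mathit{shift}(w)$ is the number of shifts; $\mathit{shiftlag}(w)$ is the maximal $n$ such that $w$ contains $n$ consecutive shifts all $\geq n$-lagged. A language has finite shift (resp. finite shiftlag) if the supremum of $\mathit{shift}$ (resp. $\mathit{shiftlag}$) over its words is finite; $\mathrm{Reg}_{\mathsf{FS}}$ denotes the class of regular languages of finite shift. For $x\in(\Sigma\cup\Gamma)^*$, $x^{-1}T=\{z: xz\in T\}$, and $w[1,i]$ is the prefix of $w$ of length $i$. For $w,w'\in T$ with $\llbracket w\rrbracket=\llbracket w'\rrbracket$, write $w\preceq_T w'$ if for all $i\le|w|$, $(w'[1,i])^{-1}T\in\mathrm{Reg}_{\mathsf{FS}}$ implies $(w[1,i])^{-1}T\in\mathrm{Reg}_{\mathsf{FS}}$.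 For languages $S,T$, $\mathit{minsync}(S,T)=\{w\in T:\llbracket w\rrbracket\in\llbracket S\rrbracket,\ w\preceq_T w'\text{ for all }w'\in T\text{ with }\llbracket w'\rrbracket=\llbracket w\rrbracket\}$. *)

theory Defs
  imports Main
begin

text \<open>Words over the alphabet Sig \<union> Gam are lists; positions are 1-based as in the paper.\<close>

definition regular_lang :: "'a set \<Rightarrow> 'a list set \<Rightarrow> bool" where
  "regular_lang A L \<longleftrightarrow> L \<subseteq> lists A \<and>
     (\<exists>(Q::nat set) q0 (\<delta>::nat \<Rightarrow> 'a \<Rightarrow> nat) F.
        finite Q \<and> q0 \<in> Q \<and> (\<forall>q\<in>Q. \<forall>a\<in>A. \<delta> q a \<in> Q) \<and> F \<subseteq> Q \<and>
        (\<forall>w\<in>lists A. w \<in> L \<longleftrightarrow> foldl \<delta> q0 w \<in> F))"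

definition proj_i :: "'a set \<Rightarrow> 'a list \<Rightarrow> 'a list" where
  "proj_i Sig w = filter (\<lambda>x. x \<in> Sig) w"

definition proj_o :: "'a set \<Rightarrow> 'a list \<Rightarrow> 'a list" where
  "proj_o Gam w = filter (\<lambda>x. x \<in> Gam) w"

definition sem :: "'a set \<Rightarrow> 'a set \<Rightarrow> 'a list \<Rightarrow> 'a list \<times> 'a list" where
  "sem Sig Gam w = (proj_i Sig w, proj_o Gam w)"

definition lag :: "'a set \<Rightarrow> 'a set \<Rightarrow> 'a list \<Rightarrow> nat \<Rightarrow> nat" where
  "lag Sig Gam w i = nat \<bar>int (length (filter (\<lambda>x. x \<in> Sig) (take i w)))
                             - int (length (filter (\<lambda>x. x \<in> Gam) (take i w)))\<bar>"

definition shifts :: "'a set \<Rightarrow> 'a list \<Rightarrow> nat set" where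
  "shifts Sig w = {i. 1 \<le> i \<and> i \<le> length w - 1 \<and>
                        ((w ! (i - 1) \<in> Sig) \<noteq> (w ! i \<in> Sig))}"

definition shift :: "'a set \<Rightarrow> 'a list \<Rightarrow> nat" where
  "shift Sig w = card (shifts Sig w)"

text \<open>w contains n consecutive shifts all \<ge>n-lagged: n consecutive entries of the
  increasingly sorted list of shifts.\<close>
definition has_lagged_shifts :: "'a set \<Rightarrow> 'a set \<Rightarrow> 'a list \<Rightarrow> nat \<Rightarrow> bool" where
  "has_lagged_shifts Sig Gam w n \<longleftrightarrow>
     (let S = sorted_list_of_set (shifts Sig w) in
       \<exists>j. j + n \<le> length S \<and> (\<forall>k<n. lag Sig Gam w (S ! (j + k)) \<ge> n))"

definition shiftlag :: "'a set \<Rightarrow> 'a set \<Rightarrow> 'a list \<Rightarrow> nat" where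
  "shiftlag Sig Gam w = Max {n. has_lagged_shifts Sig Gam w n}"

definition finite_shift :: "'a set \<Rightarrow> 'a list set \<Rightarrow> bool" where
  "finite_shift Sig L \<longleftrightarrow> bdd_above (shift Sig ` L)"

definition finite_shiftlag :: "'a set \<Rightarrow> 'a set \<Rightarrow> 'a list set \<Rightarrow> bool" where
  "finite_shiftlag Sig Gam L \<longleftrightarrow> bdd_above (shiftlag Sig Gam ` L)"

definition RegFS :: "'a set \<Rightarrow> 'a set \<Rightarrow> 'a list set \<Rightarrow> bool" where
  "RegFS Sig Gam L \<longleftrightarrow> regular_lang (Sig \<union> Gam) L \<and> finite_shift Sig L"

definition lquot :: "'a list \<Rightarrow> 'a list set \<Rightarrow> 'a list set" where
  "lquot x T = {z. x @ z \<in> T}"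

definition preceq :: "'a set \<Rightarrow> 'a set \<Rightarrow> 'a list set \<Rightarrow> 'a list \<Rightarrow> 'a list \<Rightarrow> bool" where
  "preceq Sig Gam T w w' \<longleftrightarrow> w \<in> T \<and> w' \<in> T \<and> sem Sig Gam w = sem Sig Gam w' \<and>
     (\<forall>i \<le> length w. RegFS Sig Gam (lquot (take i w') T) \<longrightarrow>
                      RegFS Sig Gam (lquot (take i w) T))"

definition minsync :: "'a set \<Rightarrow> 'a set \<Rightarrow> 'a list set \<Rightarrow> 'a list set \<Rightarrow> 'a list set" where
  "minsync Sig Gam S T = {w \<in> T. sem Sig Gam w \<in> sem Sig Gam ` S \<and>
      (\<forall>w'\<in>T. sem Sig Gam w' = sem Sig Gam w \<longrightarrow> preceq Sig Gam T w w')}"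

end

theory Submission
  imports Defs
begin

definition reg :: "'a set \<Rightarrow> 'a list set \<Rightarrow> bool" where
  "reg A L \<longleftrightarrow> L \<subseteq> lists A \<and> finite ((\<lambda>x. lquot x L) ` lists A)"

lemma lquot_Nil[simp]: "lquot [] L = L"
  by (simp add: lquot_def)

lemma lquot_lquot[simp]: "lquot y (lquot x L) = lquot (x @ y) L"
  by (simp add: lquot_def)

lemma reg_regular:
  assumes "finite A" "reg A L"
  shows "regular_lang A L"
proof -
  let ?Qs = "(\<lambda>x. lquot x L) ` lists A"
  have fin: "finite ?Qs" and sub: "L \<subseteq> lists A" using assms by (auto simp: reg_def)
  obtain f :: "'a list set \<Rightarrow> nat" and n where fn: "f ` ?Qs = {i. i < n}" "inj_on f ?Qs"
    using finite_imp_inj_to_nat_seg[OF fin] by blast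
  define g where "g = the_inv_into ?Qs f"
  define \<delta> where "\<delta> = (\<lambda>q a. f (lquot [a] (g q)))"
  have gf: "g (f M) = M" if "M \<in> ?Qs" for M
    unfolding g_def using fn(2) that by (simp add: the_inv_into_f_f)
  have key: "foldl \<delta> (f (lquot x L)) w = f (lquot (x @ w) L)"
    if "x \<in> lists A" "w \<in> lists A" for x w
    using that
  proof (induction w arbitrary: x)
    case Nil then show ?case by simp
  next
    case (Cons a w)
    have "\<delta> (f (lquot x L)) a = f (lquot (x @ [a]) L)"
    proof -
      have "lquot x L \<in> ?Qs" using Cons.prems by blast
      then have "g (f (lquot x L)) = lquot x L" by (rule gf)
      then show ?thesis unfolding \<delta>_def by simp
    qed
    then show ?case using Cons by simp
  qed
  have c1: "finite (f ` ?Qs)" using fin by simp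
  have "L \<in> ?Qs" by (rule image_eqI[of _ _ "[]"]) auto
  then have c2: "f L \<in> f ` ?Qs" by blast
  have c3: "\<forall>q\<in>f ` ?Qs. \<forall>a\<in>A. \<delta> q a \<in> f ` ?Qs"
  proof (intro ballI)
    fix q a assume "q \<in> f ` ?Qs" "a \<in> A"
    then obtain x where x: "x \<in> lists A" "q = f (lquot x L)" by auto
    have "\<delta> q a = f (lquot (x @ [a]) L)" using key[of x "[a]"] x \<open>a \<in> A\<close> by simp
    then show "\<delta> q a \<in> f ` ?Qs" using x \<open>a \<in> A\<close> by auto
  qed
  have c4: "f ` {M \<in> ?Qs. [] \<in> M} \<subseteq> f ` ?Qs" by blast
  have c5: "\<forall>w\<in>lists A. (w \<in> L) = (foldl \<delta> (f L) w \<in> f ` {M \<in> ?Qs. [] \<in> M})"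
  proof
    fix w assume w: "w \<in> lists A"
    have e: "foldl \<delta> (f L) w = f (lquot w L)" using key[of "[]" w] w by simp
    have "(f (lquot w L) \<in> f ` {M \<in> ?Qs. [] \<in> M}) = (lquot w L \<in> {M \<in> ?Qs. [] \<in> M})"
      using fn(2) w by (intro inj_on_image_mem_iff) blast+
    also have "\<dots> = ([] \<in> lquot w L)" using w by blast
    also have "\<dots> = (w \<in> L)" by (simp add: lquot_def)
    finally show "(w \<in> L) = (foldl \<delta> (f L) w \<in> f ` {M \<in> ?Qs. [] \<in> M})" using e by simp
  qed
  show ?thesis unfolding regular_lang_def
    using sub c1 c2 c3 c4 c5 by blast
qed

lemma foldl_closed:
  assumes "\<forall>q\<in>Q. \<forall>a\<in>A. \<delta> q a \<in> Q" "q \<in> Q" "w \<in> lists A"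
  shows "foldl \<delta> q w \<in> Q"
  using assms(2,3)
proof (induction w arbitrary: q)
  case Nil then show ?case by simp
next
  case (Cons a w)
  then have "\<delta> q a \<in> Q" using assms(1) by simp
  then show ?case using Cons by simp
qed

lemma reg_dfa:
  assumes "finite Q" "\<forall>q\<in>Q. \<forall>a\<in>A. \<delta> q a \<in> Q" "q \<in> Q"
  shows "reg A {z \<in> lists A. foldl \<delta> q z \<in> Fs}"
proof -
  let ?L = "{z \<in> lists A. foldl \<delta> q z \<in> Fs}"
  have "(\<lambda>x. lquot x ?L) ` lists A \<subseteq> (\<lambda>p. {z \<in> lists A. foldl \<delta> p z \<in> Fs}) ` Q"
  proof
    fix M assume "M \<in> (\<lambda>x. lquot x ?L) ` lists A"
    then obtain x where x: "x \<in> lists A" "M = lquot x ?L" by blast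
    have "M = {z \<in> lists A. foldl \<delta> (foldl \<delta> q x) z \<in> Fs}"
      unfolding x(2) lquot_def using x(1) by simp
    moreover have "foldl \<delta> q x \<in> Q" using foldl_closed[OF assms(2,3) x(1)] by blast
    ultimately show "M \<in> (\<lambda>p. {z \<in> lists A. foldl \<delta> p z \<in> Fs}) ` Q" by blast
  qed
  then have "finite ((\<lambda>x. lquot x ?L) ` lists A)"
    by (rule finite_subset) (use assms(1) in simp)
  moreover have "?L \<subseteq> lists A" by blast
  ultimately show ?thesis unfolding reg_def by blast
qed

lemma regular_reg:
  assumes "regular_lang A L"
  shows "reg A L"
proof -
  obtain Q q0 \<delta> F where d: "L \<subseteq> lists A" "finite (Q::nat set)" "q0 \<in> Q" "\<forall>q\<in>Q. \<forall>a\<in>A. \<delta> q a \<in> Q"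
    "\<forall>w\<in>lists A. w \<in> L \<longleftrightarrow> foldl \<delta> q0 w \<in> F"
    using assms unfolding regular_lang_def by blast
  have "L = {z \<in> lists A. foldl \<delta> q0 z \<in> F}"
  proof (intro set_eqI iffI)
    fix z assume "z \<in> L" then show "z \<in> {z \<in> lists A. foldl \<delta> q0 z \<in> F}" using d(1,5) by blast
  next
    fix z assume "z \<in> {z \<in> lists A. foldl \<delta> q0 z \<in> F}" then show "z \<in> L" using d(5) by blast
  qed
  then show ?thesis using reg_dfa[OF d(2) d(4) d(3)] by simp
qed

lemma reg_sub: "reg A L \<Longrightarrow> L \<subseteq> lists A"
  by (simp add: reg_def)

lemma reg_by_fun:
  assumes "L \<subseteq> lists A" "finite S" "\<And>x. x \<in> lists A \<Longrightarrow> lquot x L = h (k x)"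
    "\<And>x. x \<in> lists A \<Longrightarrow> k x \<in> S"
  shows "reg A L"
proof -
  have "(\<lambda>x. lquot x L) ` lists A \<subseteq> h ` S"
  proof
    fix M assume "M \<in> (\<lambda>x. lquot x L) ` lists A"
    then obtain x where "x \<in> lists A" "M = lquot x L" by blast
    then show "M \<in> h ` S" using assms(3,4) by blast
  qed
  then have "finite ((\<lambda>x. lquot x L) ` lists A)"
    by (rule finite_subset) (use assms(2) in simp)
  then show ?thesis unfolding reg_def using assms(1) by blast
qed

lemma reg_quots_fin: "reg A L \<Longrightarrow> finite ((\<lambda>x. lquot x L) ` lists A)"
  by (simp add: reg_def)

lemma lquot_sub: "L \<subseteq> lists A \<Longrightarrow> lquot x L \<subseteq> lists A"
  unfolding lquot_def by auto

lemma lquot_notlists: "L \<subseteq> lists A \<Longrightarrow> x \<notin> lists A \<Longrightarrow> lquot x L = {}"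
  unfolding lquot_def by auto

lemma reg_empty: "reg A {}"
  by (rule reg_by_fun[where S="{()}" and h="\<lambda>_. {}" and k="\<lambda>_. ()"]) (auto simp: lquot_def)

lemma reg_binop:
  assumes "reg A L" "reg A M" "N \<subseteq> lists A"
    "\<And>x. x \<in> lists A \<Longrightarrow> lquot x N = h (lquot x L) (lquot x M)"
  shows "reg A N"
proof (rule reg_by_fun[where S="((\<lambda>x. lquot x L) ` lists A) \<times> ((\<lambda>x. lquot x M) ` lists A)"
        and h="\<lambda>(X, Y). h X Y" and k="\<lambda>x. (lquot x L, lquot x M)"])
  show "N \<subseteq> lists A" by fact
  show "finite (((\<lambda>x. lquot x L) ` lists A) \<times> ((\<lambda>x. lquot x M) ` lists A))"
    using reg_quots_fin[OF assms(1)] reg_quots_fin[OF assms(2)] by simp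
  fix x :: "'a list" assume "x \<in> lists A"
  then show "lquot x N = (case (lquot x L, lquot x M) of (X, Y) \<Rightarrow> h X Y)"
    "(lquot x L, lquot x M) \<in> ((\<lambda>x. lquot x L) ` lists A) \<times> ((\<lambda>x. lquot x M) ` lists A)"
    using assms(4) by auto
qed

lemma reg_lquot:
  assumes "reg A L"
  shows "reg A (lquot u L)"
proof (cases "u \<in> lists A")
  case True
  have sub: "L \<subseteq> lists A" using reg_sub[OF assms] .
  show ?thesis
  proof (rule reg_by_fun[where S="(\<lambda>x. lquot x L) ` lists A" and h=id and k="\<lambda>x. lquot (u @ x) L"])
    show "lquot u L \<subseteq> lists A" using lquot_sub[OF sub] .
    show "finite ((\<lambda>x. lquot x L) ` lists A)" using reg_quots_fin[OF assms] .
    fix x :: "'a list" assume "x \<in> lists A"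
    then show "lquot x (lquot u L) = id (lquot (u @ x) L)" "lquot (u @ x) L \<in> (\<lambda>x. lquot x L) ` lists A"
      using True by auto
  qed
next
  case False
  then show ?thesis using lquot_notlists[OF reg_sub[OF assms]] reg_empty by simp
qed

lemma reg_Un:
  assumes "reg A L" "reg A M"
  shows "reg A (L \<union> M)"
  by (rule reg_binop[OF assms, where h="(\<union>)"])
    (use reg_sub[OF assms(1)] reg_sub[OF assms(2)] in \<open>auto simp: lquot_def\<close>)

lemma reg_Int:
  assumes "reg A L" "reg A M"
  shows "reg A (L \<inter> M)"
  by (rule reg_binop[OF assms, where h="(\<inter>)"])
    (use reg_sub[OF assms(1)] reg_sub[OF assms(2)] in \<open>auto simp: lquot_def\<close>)

lemma reg_Diff:
  assumes "reg A L" "reg A M"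
  shows "reg A (L - M)"
  by (rule reg_binop[OF assms, where h="(-)"])
    (use reg_sub[OF assms(1)] reg_sub[OF assms(2)] in \<open>auto simp: lquot_def\<close>)

lemma reg_UN:
  assumes "finite I" "\<And>i. i \<in> I \<Longrightarrow> reg A (M i)"
  shows "reg A (\<Union>i\<in>I. M i)"
  using assms
proof (induction I rule: finite_induct)
  case empty then show ?case using reg_empty by simp
next
  case (insert i I)
  then have "reg A (M i)" "reg A (\<Union>i\<in>I. M i)" by auto
  then show ?case using reg_Un[of A "M i" "\<Union>i\<in>I. M i"] by simp
qed

lemma reg_singleton:
  assumes "u \<in> lists A"
  shows "reg A {u}"
proof (rule reg_by_fun[where S="{{}} \<union> (\<lambda>k. {drop k u}) ` {..length u}"
      and h=id and k="\<lambda>x. lquot x {u}"])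
  show "{u} \<subseteq> lists A" using assms by simp
  show "finite ({{}} \<union> (\<lambda>k. {drop k u}) ` {..length u})" by simp
  fix x :: "'a list"
  show "lquot x {u} = id (lquot x {u})" by simp
  show "lquot x {u} \<in> {{}} \<union> (\<lambda>k. {drop k u}) ` {..length u}"
  proof (cases "\<exists>z. x @ z = u")
    case True
    then obtain z where z: "x @ z = u" by blast
    then have "lquot x {u} = {drop (length x) u}" by (auto simp: lquot_def)
    moreover have "length x \<le> length u" using z by auto
    ultimately show ?thesis by blast
  next
    case False
    then have "lquot x {u} = {}" by (auto simp: lquot_def)
    then show ?thesis by blast
  qed
qed

lemma reg_lists:
  assumes "B \<subseteq> A"
  shows "reg A (lists B)"
  apply (rule reg_by_fun[where S="{{}, lists B}" and h=id and k="\<lambda>x. lquot x (lists B)"])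
  using assms by (auto simp: lquot_def)

definition cc :: "'a list set \<Rightarrow> 'a list set \<Rightarrow> 'a list set" where
  "cc L M = {u @ v | u v. u \<in> L \<and> v \<in> M}"

lemma lquot_cc:
  "lquot x (cc L M) = cc (lquot x L) M \<union> \<Union>{lquot s M | s. \<exists>r. x = r @ s \<and> r \<in> L}"
proof (intro set_eqI iffI)
  fix z assume "z \<in> lquot x (cc L M)"
  then obtain u v where uv: "x @ z = u @ v" "u \<in> L" "v \<in> M" by (auto simp: lquot_def cc_def)
  then obtain us where "x = u @ us \<and> us @ z = v \<or> x @ us = u \<and> z = us @ v"
    using append_eq_append_conv2[of x z u v] by blast
  then show "z \<in> cc (lquot x L) M \<union> \<Union>{lquot s M | s. \<exists>r. x = r @ s \<and> r \<in> L}"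
  proof
    assume h: "x = u @ us \<and> us @ z = v"
    then have "z \<in> lquot us M" using uv by (simp add: lquot_def)
    then show ?thesis using h uv by blast
  next
    assume h: "x @ us = u \<and> z = us @ v"
    then have "us \<in> lquot x L" using uv by (simp add: lquot_def)
    then show ?thesis using h uv unfolding cc_def by blast
  qed
next
  fix z assume "z \<in> cc (lquot x L) M \<union> \<Union>{lquot s M | s. \<exists>r. x = r @ s \<and> r \<in> L}"
  then show "z \<in> lquot x (cc L M)"
  proof
    assume "z \<in> cc (lquot x L) M"
    then obtain u v where "z = u @ v" "x @ u \<in> L" "v \<in> M" by (auto simp: cc_def lquot_def)
    then show ?thesis unfolding lquot_def cc_def by (intro CollectI exI[of _ "x @ u"] exI[of _ v]) auto
  next
    assume "z \<in> \<Union>{lquot s M | s. \<exists>r. x = r @ s \<and> r \<in> L}"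
    then obtain s r where "x = r @ s" "r \<in> L" "s @ z \<in> M" by (auto simp: lquot_def)
    then show ?thesis unfolding lquot_def cc_def by (intro CollectI exI[of _ r] exI[of _ "s @ z"]) auto
  qed
qed

lemma reg_cc:
  assumes "reg A L" "reg A M"
  shows "reg A (cc L M)"
proof (rule reg_by_fun[where S="((\<lambda>x. lquot x L) ` lists A) \<times> Pow ((\<lambda>x. lquot x M) ` lists A)"
      and h="\<lambda>(X, Y). cc X M \<union> \<Union>Y"
      and k="\<lambda>x. (lquot x L, {lquot s M | s. \<exists>r. x = r @ s \<and> r \<in> L})"])
  show "cc L M \<subseteq> lists A"
  proof
    fix w assume "w \<in> cc L M"
    then obtain u v where "w = u @ v" "u \<in> L" "v \<in> M" by (auto simp: cc_def)
    then have "u \<in> lists A" "v \<in> lists A" using reg_sub[OF assms(1)] reg_sub[OF assms(2)] by auto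
    then show "w \<in> lists A" using \<open>w = u @ v\<close> by simp
  qed
  show "finite (((\<lambda>x. lquot x L) ` lists A) \<times> Pow ((\<lambda>x. lquot x M) ` lists A))"
    using reg_quots_fin[OF assms(1)] reg_quots_fin[OF assms(2)] by simp
  fix x :: "'a list" assume x: "x \<in> lists A"
  show "lquot x (cc L M) = (case (lquot x L, {lquot s M | s. \<exists>r. x = r @ s \<and> r \<in> L}) of (X, Y) \<Rightarrow> cc X M \<union> \<Union>Y)"
    using lquot_cc by simp
  have "{lquot s M | s. \<exists>r. x = r @ s \<and> r \<in> L} \<subseteq> (\<lambda>x. lquot x M) ` lists A"
    using x by auto
  then show "(lquot x L, {lquot s M | s. \<exists>r. x = r @ s \<and> r \<in> L})
    \<in> ((\<lambda>x. lquot x L) ` lists A) \<times> Pow ((\<lambda>x. lquot x M) ` lists A)" using x by blast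
qed

lemma reg_filter_pre:
  assumes "reg A X"
  shows "reg A {z \<in> lists A. filter P z \<in> X}"
  apply (rule reg_by_fun[where S="(\<lambda>x. lquot x X) ` lists A" and h="\<lambda>Y. {z \<in> lists A. filter P z \<in> Y}"
        and k="\<lambda>x. lquot (filter P x) X"])
  using reg_quots_fin[OF assms] by (auto simp: lquot_def)

fun run :: "('s \<times> 'a \<times> 's) set \<Rightarrow> 's \<Rightarrow> 'a list \<Rightarrow> 's \<Rightarrow> bool" where
  "run D s [] t \<longleftrightarrow> s = t"
| "run D s (a # w) t \<longleftrightarrow> (\<exists>s'. (s, a, s') \<in> D \<and> run D s' w t)"

lemma run_append: "run D s (u @ v) t \<longleftrightarrow> (\<exists>m. run D s u m \<and> run D m v t)"
  by (induction u arbitrary: s) auto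

lemma run_snoc: "run D s (u @ [a]) t \<longleftrightarrow> (\<exists>m. run D s u m \<and> (m, a, t) \<in> D)"
  by (simp add: run_append)

lemma run_closed: "run D s w t \<Longrightarrow> s \<in> S \<Longrightarrow> (\<And>s a t. (s, a, t) \<in> D \<Longrightarrow> s \<in> S \<Longrightarrow> t \<in> S) \<Longrightarrow> t \<in> S"
  by (induction w arbitrary: s) auto

lemma reg_nfa:
  assumes "finite S" "I \<subseteq> S" "\<And>s a t. (s, a, t) \<in> D \<Longrightarrow> s \<in> S \<Longrightarrow> t \<in> S"
  shows "reg A {w \<in> lists A. \<exists>s\<in>I. \<exists>t\<in>Fn. run D s w t}"
proof (rule reg_by_fun[where S="Pow S" and h="\<lambda>R. {z \<in> lists A. \<exists>s\<in>R. \<exists>t\<in>Fn. run D s z t}"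
      and k="\<lambda>x. {t. \<exists>s\<in>I. run D s x t}"])
  show "{w \<in> lists A. \<exists>s\<in>I. \<exists>t\<in>Fn. run D s w t} \<subseteq> lists A" by blast
  show "finite (Pow S)" using assms(1) by simp
  fix x assume x: "x \<in> lists A"
  show "lquot x {w \<in> lists A. \<exists>s\<in>I. \<exists>t\<in>Fn. run D s w t}
    = {z \<in> lists A. \<exists>s\<in>{t. \<exists>s\<in>I. run D s x t}. \<exists>t\<in>Fn. run D s z t}"
    using x by (auto simp: lquot_def run_append)
  show "{t. \<exists>s\<in>I. run D s x t} \<in> Pow S"
    using run_closed[of D _ x _ S] assms(2,3) by blast
qed

lemma shifts_sub: "shifts Sig w \<subseteq> {1..<length w}"
  unfolding shifts_def by auto

lemma finite_shifts[simp]: "finite (shifts Sig w)"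
  by (rule finite_subset[OF shifts_sub]) simp

lemma shifts_Cons:
  "shifts Sig (a # v) = Suc ` shifts Sig v \<union> (if v \<noteq> [] \<and> ((a \<in> Sig) \<noteq> (hd v \<in> Sig)) then {1} else {})"
proof (intro set_eqI iffI)
  fix s assume s: "s \<in> shifts Sig (a # v)"
  show "s \<in> Suc ` shifts Sig v \<union> (if v \<noteq> [] \<and> ((a \<in> Sig) \<noteq> (hd v \<in> Sig)) then {1} else {})"
  proof (cases "s = 1")
    case True
    then show ?thesis using s by (cases v) (auto simp: shifts_def)
  next
    case False
    have "s \<ge> 1" using s unfolding shifts_def by simp
    then have "s \<ge> 2" using False by simp
    then obtain s' where s': "s = Suc s'" "s' \<ge> 1" by (metis Suc_le_D Suc_1 Suc_le_mono)
    then have "s' \<in> shifts Sig v" using s unfolding shifts_def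
      by (cases s') auto
    then show ?thesis using s' by blast
  qed
next
  fix s assume "s \<in> Suc ` shifts Sig v \<union> (if v \<noteq> [] \<and> ((a \<in> Sig) \<noteq> (hd v \<in> Sig)) then {1} else {})"
  then show "s \<in> shifts Sig (a # v)"
  proof
    assume "s \<in> Suc ` shifts Sig v"
    then obtain s' where "s = Suc s'" "s' \<in> shifts Sig v" by blast
    then show ?thesis unfolding shifts_def by (cases s') auto
  next
    assume h: "s \<in> (if v \<noteq> [] \<and> ((a \<in> Sig) \<noteq> (hd v \<in> Sig)) then {1} else {})"
    then have "s = 1" "v \<noteq> []" "(a \<in> Sig) \<noteq> (hd v \<in> Sig)" by (auto split: if_splits)
    then show ?thesis unfolding shifts_def by (cases v) auto
  qed
qed

lemma shift_Cons:
  "shift Sig (a # v) = shift Sig v + (if v \<noteq> [] \<and> ((a \<in> Sig) \<noteq> (hd v \<in> Sig)) then 1 else 0)"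
proof -
  have "1 \<notin> Suc ` shifts Sig v" using shifts_sub[of Sig v] by auto
  moreover have "card (Suc ` shifts Sig v) = shift Sig v"
    unfolding shift_def by (simp add: card_image)
  ultimately show ?thesis unfolding shift_def shifts_Cons by auto
qed

lemma shifts_append: "(\<lambda>s. s + length u) ` shifts Sig v \<subseteq> shifts Sig (u @ v)"
proof
  fix t assume "t \<in> (\<lambda>s. s + length u) ` shifts Sig v"
  then obtain s where s: "t = s + length u" "s \<in> shifts Sig v" by blast
  then have "1 \<le> s" "s \<le> length v - 1" "(v ! (s - 1) \<in> Sig) \<noteq> (v ! s \<in> Sig)" unfolding shifts_def by auto
  moreover have "(u @ v) ! (t - 1) = v ! (s - 1)" "(u @ v) ! t = v ! s"
    using s \<open>1 \<le> s\<close> by (auto simp: nth_append)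
  ultimately show "t \<in> shifts Sig (u @ v)" unfolding shifts_def using s by auto
qed

lemma shift_append_ge: "shift Sig v \<le> shift Sig (u @ v)"
proof -
  have "shift Sig v = card ((\<lambda>s. s + length u) ` shifts Sig v)"
    unfolding shift_def by (simp add: card_image)
  also have "\<dots> \<le> shift Sig (u @ v)"
    unfolding shift_def by (rule card_mono[OF finite_shifts shifts_append])
  finally show ?thesis .
qed

lemma shift_block:
  assumes "u \<noteq> []" "\<forall>c\<in>set u. (c \<in> Sig) = b" "z \<noteq> []" "(hd z \<in> Sig) \<noteq> b"
  shows "shift Sig (u @ z) = shift Sig z + 1"
  using assms
proof (induction u)
  case Nil then show ?case by simp
next
  case (Cons a u)
  show ?case
  proof (cases "u = []")
    case True
    then show ?thesis using Cons.prems by (simp add: shift_Cons)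
  next
    case False
    then have "shift Sig (u @ z) = shift Sig z + 1" using Cons by simp
    moreover have "hd (u @ z) = hd u" using False by simp
    moreover have "hd u \<in> set u" using False by simp
    ultimately show ?thesis using Cons.prems False by (simp add: shift_Cons)
  qed
qed

definition dif :: "'a set \<Rightarrow> 'a set \<Rightarrow> 'a list \<Rightarrow> int" where
  "dif Sig Gam u = int (length (filter (\<lambda>x. x \<in> Sig) u)) - int (length (filter (\<lambda>x. x \<in> Gam) u))"

lemma dif_Nil[simp]: "dif Sig Gam [] = 0" by (simp add: dif_def)

lemma dif_append[simp]: "dif Sig Gam (u @ v) = dif Sig Gam u + dif Sig Gam v"
  by (simp add: dif_def)

lemma dif_Cons: "dif Sig Gam (a # v) = dif Sig Gam [a] + dif Sig Gam v"
  using dif_append[of Sig Gam "[a]" v] by simp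

lemma dif_bound: "\<bar>dif Sig Gam u\<bar> \<le> int (length u)"
proof (induction u)
  case Nil then show ?case by simp
next
  case (Cons a u)
  have "\<bar>dif Sig Gam [a]\<bar> \<le> 1" by (simp add: dif_def)
  then show ?case using Cons dif_Cons[of Sig Gam a u] by simp
qed

lemma lag_dif: "lag Sig Gam w i = nat \<bar>dif Sig Gam (take i w)\<bar>"
  by (simp add: lag_def dif_def)

lemma dif_lists_Sig: "Sig \<inter> Gam = {} \<Longrightarrow> u \<in> lists Sig \<Longrightarrow> dif Sig Gam u = int (length u)"
proof (induction u)
  case Nil then show ?case by simp
next
  case (Cons a u) then show ?case using dif_Cons[of Sig Gam a u] by (auto simp: dif_def)
qed

lemma dif_lists_Gam: "Sig \<inter> Gam = {} \<Longrightarrow> u \<in> lists Gam \<Longrightarrow> dif Sig Gam u = - int (length u)"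
proof (induction u)
  case Nil then show ?case by simp
next
  case (Cons a u) then show ?case using dif_Cons[of Sig Gam a u] by (auto simp: dif_def)
qed

lemma lagged_window:
  assumes "Y \<subseteq> shifts Sig w" "card Y \<ge> n" "\<forall>s\<in>Y. P < s \<and> s \<le> P'"
    "\<forall>p. P < p \<and> p \<le> P' \<longrightarrow> lag Sig Gam w p \<ge> n"
  shows "has_lagged_shifts Sig Gam w n"
proof (cases "n = 0")
  case True then show ?thesis unfolding has_lagged_shifts_def Let_def by (intro exI[of _ 0]) simp
next
  case False
  define S where "S = sorted_list_of_set (shifts Sig w)"
  have setS: "set S = shifts Sig w" unfolding S_def by simp
  have strict: "sorted_wrt (<) S" unfolding S_def by (rule strict_sorted_list_of_set)
  have mono: "S ! i \<le> S ! j" if "i \<le> j" "j < length S" for i j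
    using strict that sorted_wrt_nth_less[OF strict] by (cases "i = j") (auto simp: less_imp_le)
  have finY: "finite Y" by (rule finite_subset[OF assms(1)]) simp
  then have "Y \<noteq> {}" using assms(2) False by auto
  then obtain y where y: "y \<in> Y" by blast
  then obtain l0 where l0: "l0 < length S" "S ! l0 = y" using assms(1) setS by (metis in_set_conv_nth subsetD)
  define j where "j = (LEAST l. l < length S \<and> P < S ! l)"
  have jprop: "j < length S \<and> P < S ! j" unfolding j_def
    by (rule LeastI[of _ l0]) (use l0 y assms(3) in auto)
  have jmin: "\<not> (l < length S \<and> P < S ! l)" if "l < j" for l
    using not_less_Least[of l "\<lambda>l. l < length S \<and> P < S ! l"] that unfolding j_def by blast
  have good: "j + k < length S \<and> S ! (j + k) \<le> P'" if "k < n" for k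
  proof (rule ccontr)
    assume bad: "\<not> (j + k < length S \<and> S ! (j + k) \<le> P')"
    have "Y \<subseteq> (\<lambda>l. S ! l) ` {j..<j + k}"
    proof
      fix x assume x: "x \<in> Y"
      then obtain l where l: "l < length S" "S ! l = x" using assms(1) setS by (metis in_set_conv_nth subsetD)
      have "P < x" "x \<le> P'" using x assms(3) by auto
      have "j \<le> l" using jmin[of l] l \<open>P < x\<close> by force
      moreover have "l < j + k"
      proof (rule ccontr)
        assume "\<not> l < j + k"
        then have "j + k < length S" using l by simp
        then have "S ! (j + k) \<le> P'" using mono[of "j + k" l] l \<open>\<not> l < j + k\<close> \<open>x \<le> P'\<close> by simp
        then show False using bad \<open>j + k < length S\<close> by simp
      qed
      ultimately show "x \<in> (\<lambda>l. S ! l) ` {j..<j + k}" using l by auto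
    qed
    then have "card Y \<le> card ((\<lambda>l. S ! l) ` {j..<j + k})" by (rule card_mono[rotated]) simp
    also have "\<dots> \<le> card {j..<j + k}" by (rule card_image_le) simp
    finally show False using assms(2) that by simp
  qed
  have "j + (n - 1) < length S" using good[of "n - 1"] False by simp
  then have "j + n \<le> length S" using False by linarith
  moreover have "\<forall>k<n. lag Sig Gam w (S ! (j + k)) \<ge> n"
  proof (intro allI impI)
    fix k assume "k < n"
    then have "j + k < length S" "S ! (j + k) \<le> P'" using good by auto
    moreover have "S ! j \<le> S ! (j + k)" using mono \<open>j + k < length S\<close> by simp
    ultimately show "lag Sig Gam w (S ! (j + k)) \<ge> n" using assms(4) jprop by auto
  qed
  ultimately show ?thesis unfolding has_lagged_shifts_def Let_def S_def[symmetric] by blast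
qed

lemma shiftlag_ge:
  assumes "has_lagged_shifts Sig Gam w n"
  shows "n \<le> shiftlag Sig Gam w"
proof -
  have "{n. has_lagged_shifts Sig Gam w n} \<subseteq> {..length (sorted_list_of_set (shifts Sig w))}"
    unfolding has_lagged_shifts_def Let_def by auto
  then have "finite {n. has_lagged_shifts Sig Gam w n}" by (rule finite_subset) simp
  then show ?thesis unfolding shiftlag_def using assms by (simp add: Max_ge)
qed

lemma shifts_prefix: "shifts Sig x \<subseteq> shifts Sig (x @ z)"
proof
  fix s assume s: "s \<in> shifts Sig x"
  then have "1 \<le> s" "s < length x" "(x ! (s - 1) \<in> Sig) \<noteq> (x ! s \<in> Sig)" unfolding shifts_def by auto
  then show "s \<in> shifts Sig (x @ z)" unfolding shifts_def by (auto simp: nth_append)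
qed

lemma foldl_rep: "foldl d p c = p \<Longrightarrow> foldl d p (concat (replicate N c)) = p"
  by (induction N) auto

lemma dif_rep: "dif Sig Gam (concat (replicate N c)) = int N * dif Sig Gam c"
  by (induction N) (auto simp: algebra_simps)

locale setting =
  fixes Sig Gam :: "'a set" and Q :: "nat set" and q0 :: nat and \<delta> :: "nat \<Rightarrow> 'a \<Rightarrow> nat"
    and F :: "nat set" and K :: nat
  assumes finSig: "finite Sig" and finGam: "finite Gam" and disj: "Sig \<inter> Gam = {}"
    and finQ: "finite Q" and q0Q: "q0 \<in> Q" and clos: "\<forall>q\<in>Q. \<forall>a\<in>Sig \<union> Gam. \<delta> q a \<in> Q"
    and FQ: "F \<subseteq> Q"
    and slK: "\<And>w. w \<in> lists (Sig \<union> Gam) \<Longrightarrow> foldl \<delta> q0 w \<in> F \<Longrightarrow> shiftlag Sig Gam w \<le> K"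
begin

definition Lq :: "nat \<Rightarrow> 'a list set" where
  "Lq q = {z \<in> lists (Sig \<union> Gam). foldl \<delta> q z \<in> F}"

definition Gd :: "nat set" where
  "Gd = {q \<in> Q. finite_shift Sig (Lq q)}"

lemma ds_closed: "q \<in> Q \<Longrightarrow> x \<in> lists (Sig \<union> Gam) \<Longrightarrow> foldl \<delta> q x \<in> Q"
  using foldl_closed[OF clos] by blast

lemma lquot_T: "x \<in> lists (Sig \<union> Gam) \<Longrightarrow> lquot x (Lq q0) = Lq (foldl \<delta> q0 x)"
  unfolding lquot_def Lq_def by auto

lemma regular_Lq: "q \<in> Q \<Longrightarrow> regular_lang (Sig \<union> Gam) (Lq q)"
  unfolding regular_lang_def Lq_def using finQ clos FQ by blast

lemma reg_Lq: "q \<in> Q \<Longrightarrow> reg (Sig \<union> Gam) (Lq q)"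
  unfolding Lq_def using reg_dfa[OF finQ clos] by blast

lemma RegFS_iff:
  assumes "x \<in> lists (Sig \<union> Gam)"
  shows "RegFS Sig Gam (lquot x (Lq q0)) \<longleftrightarrow> foldl \<delta> q0 x \<in> Gd"
proof -
  have "foldl \<delta> q0 x \<in> Q" using ds_closed[OF q0Q assms] .
  then show ?thesis unfolding RegFS_def Gd_def lquot_T[OF assms] using regular_Lq by blast
qed

lemma Gd_up:
  assumes "p \<in> Gd" "y \<in> lists (Sig \<union> Gam)"
  shows "foldl \<delta> p y \<in> Gd"
proof -
  have pQ: "p \<in> Q" and b: "bdd_above (shift Sig ` Lq p)" using assms(1) by (auto simp: Gd_def finite_shift_def)
  then obtain M where M: "\<And>z. z \<in> Lq p \<Longrightarrow> shift Sig z \<le> M" by (auto simp: bdd_above_def)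
  have "shift Sig z \<le> M" if "z \<in> Lq (foldl \<delta> p y)" for z
  proof -
    have "y @ z \<in> Lq p" using that assms(2) by (auto simp: Lq_def)
    then show ?thesis using M[of "y @ z"] shift_append_ge[of Sig z y] by simp
  qed
  then have "bdd_above (shift Sig ` Lq (foldl \<delta> p y))" by (auto simp: bdd_above_def)
  then show ?thesis using ds_closed[OF pQ assms(2)] by (auto simp: Gd_def finite_shift_def)
qed

lemma not_Gd_unbounded:
  assumes "q \<in> Q" "q \<notin> Gd"
  obtains z where "z \<in> Lq q" "shift Sig z \<ge> N"
proof -
  have "\<not> bdd_above (shift Sig ` Lq q)" using assms by (auto simp: Gd_def finite_shift_def)
  then have "\<exists>z\<in>Lq q. shift Sig z > N" by (auto simp: bdd_above_def not_le)
  then show ?thesis using that by force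
qed

definition B :: nat where "B = (K + 1) * card Q + K + 1"

lemma contra_window:
  assumes "W \<in> Lq q0" "Y \<subseteq> shifts Sig W" "card Y \<ge> K + 1" "\<forall>s\<in>Y. P < s \<and> s \<le> P'"
    "\<forall>p. P < p \<and> p \<le> P' \<longrightarrow> lag Sig Gam W p \<ge> K + 1"
  shows False
proof -
  have "has_lagged_shifts Sig Gam W (K + 1)" by (rule lagged_window[OF assms(2-5)])
  then have "K + 1 \<le> shiftlag Sig Gam W" by (rule shiftlag_ge)
  moreover have "shiftlag Sig Gam W \<le> K" using assms(1) slK by (auto simp: Lq_def)
  ultimately show False by simp
qed

lemma lag_bound:
  assumes x: "x \<in> lists (Sig \<union> Gam)" and nG: "foldl \<delta> q0 x \<notin> Gd"
  shows "\<bar>dif Sig Gam x\<bar> \<le> int B"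
proof (rule ccontr)
  assume big: "\<not> \<bar>dif Sig Gam x\<bar> \<le> int B"
  define q where "q = foldl \<delta> q0 x"
  have qQ: "q \<in> Q" unfolding q_def using ds_closed[OF q0Q x] .
  have nGq: "q \<notin> Gd" using nG q_def by simp
  define m where "m = card Q"
  have m1: "m \<ge> 1" unfolding m_def using finQ q0Q card_0_eq by fastforce
  have lenx: "int (length x) > int B" using big dif_bound[of Sig Gam x] by simp
  show False
  proof (cases "\<exists>a. a + m \<le> length x \<and> (\<forall>s. a < s \<and> s < a + m \<longrightarrow> s \<notin> shifts Sig x)")
    case True
    then obtain a where a: "a + m \<le> length x" "\<And>s. a < s \<Longrightarrow> s < a + m \<Longrightarrow> s \<notin> shifts Sig x" by blast
    define f where "f = (\<lambda>k. foldl \<delta> q0 (take (a + k) x))"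
    have "f ` {0..m} \<subseteq> Q"
    proof
      fix p assume "p \<in> f ` {0..m}"
      then obtain k where "p = f k" by blast
      moreover have "take (a + k) x \<in> lists (Sig \<union> Gam)" using x by (auto dest: in_set_takeD)
      ultimately show "p \<in> Q" unfolding f_def using ds_closed[OF q0Q] by blast
    qed
    then have "card (f ` {0..m}) \<le> m" unfolding m_def using finQ by (simp add: card_mono)
    then have "card (f ` {0..m}) < card {0..m}" by simp
    then have "\<not> inj_on f {0..m}" by (rule pigeonhole)
    then obtain k1' k2' where kk: "k1' \<le> m" "k2' \<le> m" "k1' \<noteq> k2'" "f k1' = f k2'"
      unfolding inj_on_def by auto
    define k1 where "k1 = min k1' k2'"
    define k2 where "k2 = max k1' k2'"
    have k: "k1 < k2" "k2 \<le> m" "f k1 = f k2" using kk unfolding k1_def k2_def by (auto simp: min_def max_def)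
    define i1 where "i1 = a + k1"
    define i2 where "i2 = a + k2"
    define c where "c = drop i1 (take i2 x)"
    have i12: "i1 < i2" "i2 \<le> length x" using k a(1) unfolding i1_def i2_def by auto
    have lenc: "length c = i2 - i1" unfolding c_def using i12 by simp
    have tk: "take i2 x = take i1 x @ c"
    proof -
      have "take i1 (take i2 x) = take i1 x" using i12 by (simp add: min_def)
      then show ?thesis unfolding c_def by (metis append_take_drop_id)
    qed
    have xsplit: "x = take i1 x @ c @ drop i2 x"
      using tk append_take_drop_id[of i2 x] by simp
    have same: "(x ! l \<in> Sig) = (x ! i1 \<in> Sig)" if "i1 \<le> l" "l < i2" for l
      using that
    proof (induction l rule: dec_induct)
      case base then show ?case by simp
    next
      case (step l)
      have "Suc l \<notin> shifts Sig x" using a(2)[of "Suc l"] step i12 k unfolding i1_def i2_def by simp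
      moreover have "Suc l \<le> length x - 1" using step i12 by simp
      ultimately have "(x ! l \<in> Sig) = (x ! Suc l \<in> Sig)" unfolding shifts_def by simp
      then show ?case using step by simp
    qed
    have cA: "c \<in> lists (Sig \<union> Gam)" using x unfolding c_def by (auto dest: in_set_takeD in_set_dropD)
    have csame: "\<forall>e\<in>set c. (e \<in> Sig) = (x ! i1 \<in> Sig)"
    proof
      fix e assume "e \<in> set c"
      then obtain l where l: "l < length c" "c ! l = e" by (metis in_set_conv_nth)
      have "c ! l = x ! (i1 + l)" unfolding c_def using l lenc i12 by simp
      then show "(e \<in> Sig) = (x ! i1 \<in> Sig)" using same[of "i1 + l"] l lenc by simp
    qed
    have difc: "\<bar>dif Sig Gam c\<bar> = int (length c)"
    proof (cases "x ! i1 \<in> Sig")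
      case True
      then have "c \<in> lists Sig" using csame by auto
      then show ?thesis using dif_lists_Sig[OF disj] by simp
    next
      case False
      then have "c \<in> lists Gam" using csame cA by auto
      then show ?thesis using dif_lists_Gam[OF disj] by simp
    qed
    have c1: "length c \<ge> 1" using lenc i12 by simp
    obtain z where z: "z \<in> Lq q" "shift Sig z \<ge> K + 1" using not_Gd_unbounded[OF qQ nGq] by blast
    define N where "N = length x + length z + K + 2"
    define x' where "x' = take i1 x @ concat (replicate N c) @ drop i2 x"
    have p1: "foldl \<delta> (foldl \<delta> q0 (take i1 x)) c = foldl \<delta> q0 (take i1 x)"
      using k(3) unfolding f_def i1_def[symmetric] i2_def[symmetric] tk by simp
    have "foldl \<delta> q0 x' = foldl \<delta> (foldl \<delta> q0 (take i1 x)) (drop i2 x)"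
      unfolding x'_def using foldl_rep[OF p1] by simp
    also have "\<dots> = q" unfolding q_def using p1 by (subst xsplit) simp
    finally have dsx': "foldl \<delta> q0 x' = q" .
    have t1: "take i1 x \<in> lists (Sig \<union> Gam)" using x by (auto dest: in_set_takeD)
    have t2: "drop i2 x \<in> lists (Sig \<union> Gam)" using x by (auto dest: in_set_dropD)
    have t3: "concat (replicate N c) \<in> lists (Sig \<union> Gam)" using cA by (induction N) auto
    have x'A: "x' \<in> lists (Sig \<union> Gam)" unfolding x'_def using t1 t2 t3 by simp
    have difx': "dif Sig Gam x' = dif Sig Gam x + int (N - 1) * dif Sig Gam c"
    proof -
      have e1: "dif Sig Gam x = dif Sig Gam (take i1 x) + dif Sig Gam c + dif Sig Gam (drop i2 x)"
        by (subst xsplit) simp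
      have e2: "int N = int (N - 1) + 1" unfolding N_def by simp
      have e3: "dif Sig Gam x' = dif Sig Gam (take i1 x) + int N * dif Sig Gam c + dif Sig Gam (drop i2 x)"
        unfolding x'_def by (simp only: dif_append dif_rep add.assoc)
      have e4: "int N * dif Sig Gam c = int (N - 1) * dif Sig Gam c + dif Sig Gam c"
        unfolding e2 by (simp add: distrib_right)
      show ?thesis using e1 e3 e4 by linarith
    qed
    have "int (N - 1) * 1 \<le> int (N - 1) * int (length c)"
      using c1 by (intro mult_left_mono) auto
    then have "\<bar>int (N - 1) * dif Sig Gam c\<bar> \<ge> int (N - 1)"
      using difc by (simp add: abs_mult)
    moreover have "int (N - 1) = int (length x) + int (length z) + int K + 1" unfolding N_def by simp
    ultimately have bigx': "\<bar>dif Sig Gam x'\<bar> \<ge> int (length z) + int K + 1"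
      using difx' dif_bound[of Sig Gam x] by linarith
    define W where "W = x' @ z"
    have WT: "W \<in> Lq q0" unfolding W_def using z(1) x'A dsx' by (auto simp: Lq_def)
    show False
    proof (rule contra_window[OF WT, of "(\<lambda>s. s + length x') ` shifts Sig z" "length x'" "length W"])
      show "(\<lambda>s. s + length x') ` shifts Sig z \<subseteq> shifts Sig W" unfolding W_def by (rule shifts_append)
      show "K + 1 \<le> card ((\<lambda>s. s + length x') ` shifts Sig z)"
        using z(2) by (simp add: card_image shift_def)
      show "\<forall>s\<in>(\<lambda>s. s + length x') ` shifts Sig z. length x' < s \<and> s \<le> length W"
        using shifts_sub[of Sig z] unfolding W_def by force
      show "\<forall>p. length x' < p \<and> p \<le> length W \<longrightarrow> K + 1 \<le> lag Sig Gam W p"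
      proof (intro allI impI)
        fix p assume p: "length x' < p \<and> p \<le> length W"
        have "take p W = x' @ take (p - length x') z" unfolding W_def using p by simp
        then have "dif Sig Gam (take p W) = dif Sig Gam x' + dif Sig Gam (take (p - length x') z)" by simp
        moreover have "\<bar>dif Sig Gam (take (p - length x') z)\<bar> \<le> int (length z)"
          using dif_bound[of Sig Gam "take (p - length x') z"] by simp
        ultimately have "\<bar>dif Sig Gam (take p W)\<bar> \<ge> int K + 1" using bigx' by linarith
        then show "K + 1 \<le> lag Sig Gam W p" unfolding lag_dif by linarith
      qed
    qed
  next
    case False
    then have win: "\<And>a. a + m \<le> length x \<Longrightarrow> \<exists>s. a < s \<and> s < a + m \<and> s \<in> shifts Sig x" by blast
    have "length x > B" using lenx by simp
    then have lx: "length x \<ge> (K + 1) * m" unfolding B_def m_def by simp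
    define a where "a = (\<lambda>t. length x - (t + 1) * m)"
    define sh where "sh = (\<lambda>t. SOME s. a t < s \<and> s < a t + m \<and> s \<in> shifts Sig x)"
    have shp: "a t < sh t \<and> sh t < a t + m \<and> sh t \<in> shifts Sig x" if "t \<le> K" for t
    proof -
      have "(t + 1) * m \<le> (K + 1) * m" using that by simp
      then have "(t + 1) * m \<le> length x" using lx by linarith
      moreover have "m \<le> (t + 1) * m" by simp
      ultimately have "a t + m \<le> length x" unfolding a_def by linarith
      then show ?thesis unfolding sh_def using someI_ex[OF win] by blast
    qed
    have inj: "inj_on sh {..K}"
    proof (rule inj_onI)
      fix t t' assume tt: "t \<in> {..K}" "t' \<in> {..K}" "sh t = sh t'"
      show "t = t'"
      proof (rule ccontr)
        assume "t \<noteq> t'"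
        then consider "t < t'" | "t' < t" by linarith
        then show False
        proof cases
          case 1
          have "a t \<ge> a t' + m"
          proof -
            have "(t' + 1) * m \<le> (K + 1) * m" using tt by simp
            then have "(t' + 1) * m \<le> length x" using lx by linarith
            moreover have "(t + 1) * m + m \<le> (t' + 1) * m" using mult_le_mono1[of "Suc t" t' m] 1 by simp
            ultimately show ?thesis unfolding a_def by linarith
          qed
          then show False using shp[of t] shp[of t'] tt by auto
        next
          case 2
          have "a t' \<ge> a t + m"
          proof -
            have "(t + 1) * m \<le> (K + 1) * m" using tt by simp
            then have "(t + 1) * m \<le> length x" using lx by linarith
            moreover have "(t' + 1) * m + m \<le> (t + 1) * m" using mult_le_mono1[of "Suc t'" t m] 2 by simp
            ultimately show ?thesis unfolding a_def by linarith
          qed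
          then show False using shp[of t] shp[of t'] tt by auto
        qed
      qed
    qed
    obtain z where z: "z \<in> Lq q" using not_Gd_unbounded[OF qQ nGq] by blast
    define W where "W = x @ z"
    have WT: "W \<in> Lq q0" unfolding W_def using z(1) x q_def by (auto simp: Lq_def)
    show False
    proof (rule contra_window[OF WT, of "sh ` {..K}" "length x - (K + 1) * m" "length x"])
      show "sh ` {..K} \<subseteq> shifts Sig W" unfolding W_def using shp shifts_prefix by blast
      show "K + 1 \<le> card (sh ` {..K})" using inj by (simp add: card_image)
      show "\<forall>s\<in>sh ` {..K}. length x - (K + 1) * m < s \<and> s \<le> length x"
      proof
        fix s assume "s \<in> sh ` {..K}"
        then obtain t where t: "t \<le> K" "s = sh t" by auto
        have "(t + 1) * m \<le> (K + 1) * m" using t by simp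
        then have "length x - (K + 1) * m \<le> a t" unfolding a_def by (rule diff_le_mono2)
        moreover have "s \<in> shifts Sig x" using shp[OF t(1)] t by simp
        then have "s \<le> length x" using shifts_sub[of Sig x] by auto
        ultimately show "length x - (K + 1) * m < s \<and> s \<le> length x" using shp[OF t(1)] t by auto
      qed
      show "\<forall>p. length x - (K + 1) * m < p \<and> p \<le> length x \<longrightarrow> K + 1 \<le> lag Sig Gam W p"
      proof (intro allI impI)
        fix p assume p: "length x - (K + 1) * m < p \<and> p \<le> length x"
        have tp: "take p W = take p x" unfolding W_def using p by simp
        have "dif Sig Gam x = dif Sig Gam (take p x) + dif Sig Gam (drop p x)"
          by (subst append_take_drop_id[symmetric, of x p]) (simp only: dif_append)
        moreover have "\<bar>dif Sig Gam (drop p x)\<bar> \<le> int ((K + 1) * m)"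
        proof -
          have "length (drop p x) \<le> (K + 1) * m" using p by (simp only: length_drop) linarith
          then have "int (length (drop p x)) \<le> int ((K + 1) * m)" by (simp only: of_nat_le_iff)
          then show ?thesis using dif_bound[of Sig Gam "drop p x"] by linarith
        qed
        ultimately have "\<bar>dif Sig Gam (take p x)\<bar> \<ge> int K + 1"
          using big unfolding B_def m_def by simp
        then show "K + 1 \<le> lag Sig Gam W p" unfolding lag_dif tp by linarith
      qed
    qed
  qed
qed

end

definition recog :: "'a set \<Rightarrow> ('a list \<times> 'a list) set \<Rightarrow> bool" where
  "recog A R \<longleftrightarrow> (\<exists>P. finite P \<and> (\<forall>(U, V)\<in>P. reg A U \<and> reg A V) \<and> R = (\<Union>(U, V)\<in>P. U \<times> V))"

lemma recog_empty: "recog A {}"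
  unfolding recog_def by (intro exI[of _ "{}"]) simp

lemma recog_prod: "reg A U \<Longrightarrow> reg A V \<Longrightarrow> recog A (U \<times> V)"
  unfolding recog_def by (intro exI[of _ "{(U, V)}"]) simp

lemma recog_Un:
  assumes "recog A R1" "recog A R2"
  shows "recog A (R1 \<union> R2)"
proof -
  obtain P1 where P1: "finite P1" "\<forall>(U, V)\<in>P1. reg A U \<and> reg A V" "R1 = (\<Union>(U, V)\<in>P1. U \<times> V)"
    using assms(1) unfolding recog_def by blast
  obtain P2 where P2: "finite P2" "\<forall>(U, V)\<in>P2. reg A U \<and> reg A V" "R2 = (\<Union>(U, V)\<in>P2. U \<times> V)"
    using assms(2) unfolding recog_def by blast
  show ?thesis unfolding recog_def
  proof (intro exI[of _ "P1 \<union> P2"] conjI)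
    show "finite (P1 \<union> P2)" using P1(1) P2(1) by simp
    show "\<forall>(U, V)\<in>P1 \<union> P2. reg A U \<and> reg A V" using P1(2) P2(2) by blast
    show "R1 \<union> R2 = (\<Union>(U, V)\<in>P1 \<union> P2. U \<times> V)" unfolding P1(3) P2(3) by (rule UN_Un[symmetric])
  qed
qed

lemma recog_UN:
  assumes "finite I" "\<And>i. i \<in> I \<Longrightarrow> recog A (R i)"
  shows "recog A (\<Union>i\<in>I. R i)"
  using assms
proof (induction I rule: finite_induct)
  case empty then show ?case using recog_empty by simp
next
  case (insert i I)
  then have "recog A (R i)" "recog A (\<Union>i\<in>I. R i)" by auto
  then show ?case using recog_Un[of A "R i" "\<Union>i\<in>I. R i"] by simp
qed

lemma recog_left:
  assumes "recog A R" "reg A U0"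
  shows "recog A {(u @ s, t) | u s t. u \<in> U0 \<and> (s, t) \<in> R}"
proof -
  obtain P where P: "finite P" "\<forall>(U, V)\<in>P. reg A U \<and> reg A V" "R = (\<Union>(U, V)\<in>P. U \<times> V)"
    using assms(1) unfolding recog_def by blast
  have eq: "{(u @ s, t) | u s t. u \<in> U0 \<and> (s, t) \<in> R} = (\<Union>(U, V)\<in>(\<lambda>(U, V). (cc U0 U, V)) ` P. U \<times> V)"
  proof (intro set_eqI iffI)
    fix x assume "x \<in> {(u @ s, t) | u s t. u \<in> U0 \<and> (s, t) \<in> R}"
    then obtain u s t U V where "x = (u @ s, t)" "u \<in> U0" "(U, V) \<in> P" "s \<in> U" "t \<in> V"
      unfolding P(3) by blast
    then show "x \<in> (\<Union>(U, V)\<in>(\<lambda>(U, V). (cc U0 U, V)) ` P. U \<times> V)"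
      unfolding cc_def by (intro UN_I[of "(cc U0 U, V)"]) (auto simp: cc_def)
  next
    fix x assume "x \<in> (\<Union>(U, V)\<in>(\<lambda>(U, V). (cc U0 U, V)) ` P. U \<times> V)"
    then obtain U V where UV: "(U, V) \<in> P" "x \<in> cc U0 U \<times> V" by auto
    then obtain u s t where "x = (u @ s, t)" "u \<in> U0" "s \<in> U" "t \<in> V" unfolding cc_def by auto
    then show "x \<in> {(u @ s, t) | u s t. u \<in> U0 \<and> (s, t) \<in> R}" unfolding P(3) using UV(1) by blast
  qed
  show ?thesis unfolding recog_def eq
  proof (intro exI[of _ "(\<lambda>(U, V). (cc U0 U, V)) ` P"] conjI)
    show "finite ((\<lambda>(U, V). (cc U0 U, V)) ` P)" using P(1) by simp
    show "\<forall>(U, V)\<in>(\<lambda>(U, V). (cc U0 U, V)) ` P. reg A U \<and> reg A V"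
    proof
      fix UV assume "UV \<in> (\<lambda>(U, V). (cc U0 U, V)) ` P"
      then obtain U V where UV: "(U, V) \<in> P" "UV = (cc U0 U, V)" by auto
      then have "reg A U" "reg A V" using P(2) by auto
      then have "reg A (cc U0 U)" using reg_cc[OF assms(2)] by blast
      then show "case UV of (U, V) \<Rightarrow> reg A U \<and> reg A V" using UV \<open>reg A U\<close> \<open>reg A V\<close> by simp
    qed
  qed simp
qed

lemma recog_right:
  assumes "recog A R" "reg A V0"
  shows "recog A {(s, v @ t) | v s t. v \<in> V0 \<and> (s, t) \<in> R}"
proof -
  obtain P where P: "finite P" "\<forall>(U, V)\<in>P. reg A U \<and> reg A V" "R = (\<Union>(U, V)\<in>P. U \<times> V)"
    using assms(1) unfolding recog_def by blast
  have eq: "{(s, v @ t) | v s t. v \<in> V0 \<and> (s, t) \<in> R} = (\<Union>(U, V)\<in>(\<lambda>(U, V). (U, cc V0 V)) ` P. U \<times> V)"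
  proof (intro set_eqI iffI)
    fix x assume "x \<in> {(s, v @ t) | v s t. v \<in> V0 \<and> (s, t) \<in> R}"
    then obtain v s t U V where "x = (s, v @ t)" "v \<in> V0" "(U, V) \<in> P" "s \<in> U" "t \<in> V"
      unfolding P(3) by blast
    then show "x \<in> (\<Union>(U, V)\<in>(\<lambda>(U, V). (U, cc V0 V)) ` P. U \<times> V)"
      unfolding cc_def by (intro UN_I[of "(U, cc V0 V)"]) (auto simp: cc_def)
  next
    fix x assume "x \<in> (\<Union>(U, V)\<in>(\<lambda>(U, V). (U, cc V0 V)) ` P. U \<times> V)"
    then obtain U V where UV: "(U, V) \<in> P" "x \<in> U \<times> cc V0 V" by auto
    then obtain v s t where "x = (s, v @ t)" "v \<in> V0" "s \<in> U" "t \<in> V" unfolding cc_def by auto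
    then show "x \<in> {(s, v @ t) | v s t. v \<in> V0 \<and> (s, t) \<in> R}" unfolding P(3) using UV(1) by blast
  qed
  show ?thesis unfolding recog_def eq
  proof (intro exI[of _ "(\<lambda>(U, V). (U, cc V0 V)) ` P"] conjI)
    show "finite ((\<lambda>(U, V). (U, cc V0 V)) ` P)" using P(1) by simp
    show "\<forall>(U, V)\<in>(\<lambda>(U, V). (U, cc V0 V)) ` P. reg A U \<and> reg A V"
    proof
      fix UV assume "UV \<in> (\<lambda>(U, V). (U, cc V0 V)) ` P"
      then obtain U V where UV: "(U, V) \<in> P" "UV = (U, cc V0 V)" by auto
      then have "reg A U" "reg A V" using P(2) by auto
      then have "reg A (cc V0 V)" using reg_cc[OF assms(2)] by blast
      then show "case UV of (U, V) \<Rightarrow> reg A U \<and> reg A V" using UV \<open>reg A U\<close> \<open>reg A V\<close> by simp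
    qed
  qed simp
qed

lemma reg_lift1:
  assumes "reg A U" "e' \<in> lists A"
  shows "reg A {z \<in> lists A. \<exists>s\<in>U. e' @ s = e @ filter P z}"
proof -
  have r: "reg A (lquot e (cc {e'} U))"
    by (rule reg_lquot[OF reg_cc[OF reg_singleton[OF assms(2)] assms(1)]])
  have "{z \<in> lists A. \<exists>s\<in>U. e' @ s = e @ filter P z} = {z \<in> lists A. filter P z \<in> lquot e (cc {e'} U)}"
  proof (intro Collect_cong conj_cong refl)
    fix z
    show "(\<exists>s\<in>U. e' @ s = e @ filter P z) = (filter P z \<in> lquot e (cc {e'} U))"
      unfolding lquot_def cc_def by (auto simp del: append_eq_append_conv2) (metis)
  qed
  then show ?thesis using reg_filter_pre[OF r] by simp
qed

lemma reg_lift: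
  assumes "recog A R" "e1' \<in> lists A" "e2' \<in> lists A"
  shows "reg A {z \<in> lists A. \<exists>(s, t)\<in>R. e1' @ s = e1 @ filter P1 z \<and> e2' @ t = e2 @ filter P2 z}"
proof -
  obtain P where P: "finite P" "\<forall>(U, V)\<in>P. reg A U \<and> reg A V" "R = (\<Union>(U, V)\<in>P. U \<times> V)"
    using assms(1) unfolding recog_def by blast
  have eq: "{z \<in> lists A. \<exists>(s, t)\<in>R. e1' @ s = e1 @ filter P1 z \<and> e2' @ t = e2 @ filter P2 z}
    = (\<Union>(U, V)\<in>P. {z \<in> lists A. \<exists>s\<in>U. e1' @ s = e1 @ filter P1 z} \<inter> {z \<in> lists A. \<exists>t\<in>V. e2' @ t = e2 @ filter P2 z})"
  proof (intro set_eqI iffI)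
    fix z assume "z \<in> {z \<in> lists A. \<exists>(s, t)\<in>R. e1' @ s = e1 @ filter P1 z \<and> e2' @ t = e2 @ filter P2 z}"
    then obtain s t U V where "z \<in> lists A" "(U, V) \<in> P" "s \<in> U" "t \<in> V"
      "e1' @ s = e1 @ filter P1 z" "e2' @ t = e2 @ filter P2 z" unfolding P(3) by auto
    then show "z \<in> (\<Union>(U, V)\<in>P. {z \<in> lists A. \<exists>s\<in>U. e1' @ s = e1 @ filter P1 z} \<inter> {z \<in> lists A. \<exists>t\<in>V. e2' @ t = e2 @ filter P2 z})"
      by (intro UN_I[of "(U, V)"]) auto
  next
    fix z assume "z \<in> (\<Union>(U, V)\<in>P. {z \<in> lists A. \<exists>s\<in>U. e1' @ s = e1 @ filter P1 z} \<inter> {z \<in> lists A. \<exists>t\<in>V. e2' @ t = e2 @ filter P2 z})"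
    then obtain s t U V where "z \<in> lists A" "(U, V) \<in> P" "s \<in> U" "t \<in> V"
      "e1' @ s = e1 @ filter P1 z" "e2' @ t = e2 @ filter P2 z" by auto
    then show "z \<in> {z \<in> lists A. \<exists>(s, t)\<in>R. e1' @ s = e1 @ filter P1 z \<and> e2' @ t = e2 @ filter P2 z}"
      unfolding P(3) by blast
  qed
  show ?thesis unfolding eq
  proof (rule reg_UN[OF P(1)])
    fix UV assume "UV \<in> P"
    then obtain U V where "UV = (U, V)" "reg A U" "reg A V" using P(2) by auto
    then show "reg A (case UV of (U, V) \<Rightarrow> {z \<in> lists A. \<exists>s\<in>U. e1' @ s = e1 @ filter P1 z} \<inter> {z \<in> lists A. \<exists>t\<in>V. e2' @ t = e2 @ filter P2 z})"
      using reg_Int[OF reg_lift1[OF \<open>reg A U\<close> assms(2)] reg_lift1[OF \<open>reg A V\<close> assms(3)]] \<open>UV = (U, V)\<close> by simp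
  qed
qed

context setting
begin

abbreviation "AA \<equiv> Sig \<union> Gam"

lemma reg_sigblock: "q \<in> Q \<Longrightarrow> X \<subseteq> AA \<Longrightarrow> reg AA {u \<in> lists X. foldl \<delta> q u \<in> Fs}"
proof -
  assume q: "q \<in> Q" and X: "X \<subseteq> AA"
  have "{u \<in> lists X. foldl \<delta> q u \<in> Fs} = lists X \<inter> {u \<in> lists AA. foldl \<delta> q u \<in> Fs}"
    using X by auto
  then show ?thesis using reg_Int[OF reg_lists[OF X] reg_dfa[OF finQ clos q]] by simp
qed

primrec Sn :: "nat \<Rightarrow> nat \<Rightarrow> ('a list \<times> 'a list) set" where
  "Sn 0 q = {(u, []) | u. u \<in> lists Sig \<and> foldl \<delta> q u \<in> F} \<union> {([], v) | v. v \<in> lists Gam \<and> foldl \<delta> q v \<in> F}"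
| "Sn (Suc n) q = Sn n q \<union> (\<Union>p\<in>Q. {(u @ s, t) | u s t. u \<in> {u \<in> lists Sig. foldl \<delta> q u \<in> {p}} \<and> (s, t) \<in> Sn n p}
      \<union> {(s, v @ t) | v s t. v \<in> {v \<in> lists Gam. foldl \<delta> q v \<in> {p}} \<and> (s, t) \<in> Sn n p})"

lemma recog_Sn: "q \<in> Q \<Longrightarrow> recog AA (Sn n q)"
proof (induction n arbitrary: q)
  case 0
  have "Sn 0 q = {u \<in> lists Sig. foldl \<delta> q u \<in> F} \<times> {[]} \<union> {[]} \<times> {v \<in> lists Gam. foldl \<delta> q v \<in> F}"
    by auto
  moreover have "recog AA ({u \<in> lists Sig. foldl \<delta> q u \<in> F} \<times> {[]})"
    by (rule recog_prod[OF reg_sigblock[OF 0 Un_upper1] reg_singleton]) simp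
  moreover have "recog AA ({[]} \<times> {v \<in> lists Gam. foldl \<delta> q v \<in> F})"
    by (rule recog_prod[OF reg_singleton reg_sigblock[OF 0 Un_upper2]]) simp
  ultimately show ?case using recog_Un by simp
next
  case (Suc n)
  have "recog AA (\<Union>p\<in>Q. {(u @ s, t) | u s t. u \<in> {u \<in> lists Sig. foldl \<delta> q u \<in> {p}} \<and> (s, t) \<in> Sn n p}
      \<union> {(s, v @ t) | v s t. v \<in> {v \<in> lists Gam. foldl \<delta> q v \<in> {p}} \<and> (s, t) \<in> Sn n p})"
  proof (rule recog_UN[OF finQ])
    fix p assume p: "p \<in> Q"
    show "recog AA ({(u @ s, t) | u s t. u \<in> {u \<in> lists Sig. foldl \<delta> q u \<in> {p}} \<and> (s, t) \<in> Sn n p}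
      \<union> {(s, v @ t) | v s t. v \<in> {v \<in> lists Gam. foldl \<delta> q v \<in> {p}} \<and> (s, t) \<in> Sn n p})"
      by (rule recog_Un[OF recog_left[OF Suc.IH[OF p] reg_sigblock[OF Suc.prems Un_upper1]]
                            recog_right[OF Suc.IH[OF p] reg_sigblock[OF Suc.prems Un_upper2]]])
  qed
  then show ?case using recog_Un[OF Suc.IH[OF Suc.prems]] by simp
qed

lemma pi_Sig: "u \<in> lists Sig \<Longrightarrow> filter (\<lambda>x. x \<in> Sig) u = u"
  by (induction u) auto

lemma po_Sig: "u \<in> lists Sig \<Longrightarrow> filter (\<lambda>x. x \<in> Gam) u = []"
  using disj by (induction u) auto

lemma pi_Gam: "u \<in> lists Gam \<Longrightarrow> filter (\<lambda>x. x \<in> Sig) u = []"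
  using disj by (induction u) auto

lemma po_Gam: "u \<in> lists Gam \<Longrightarrow> filter (\<lambda>x. x \<in> Gam) u = u"
  by (induction u) auto

lemma Sn_sound: "q \<in> Q \<Longrightarrow> (s, t) \<in> Sn n q \<Longrightarrow>
    \<exists>z\<in>Lq q. filter (\<lambda>x. x \<in> Sig) z = s \<and> filter (\<lambda>x. x \<in> Gam) z = t"
proof (induction n arbitrary: q s t)
  case 0
  then show ?case
  proof (cases "(s, t) \<in> {(u, []) | u. u \<in> lists Sig \<and> foldl \<delta> q u \<in> F}")
    case True
    then have "s \<in> lists Sig" "foldl \<delta> q s \<in> F" "t = []" by auto
    then show ?thesis using pi_Sig po_Sig by (intro bexI[of _ s]) (auto simp: Lq_def)
  next
    case False
    then have "t \<in> lists Gam" "foldl \<delta> q t \<in> F" "s = []" using 0 by auto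
    then show ?thesis using pi_Gam po_Gam by (intro bexI[of _ t]) (auto simp: Lq_def)
  qed
next
  case (Suc n)
  show ?case
  proof (cases "(s, t) \<in> Sn n q")
    case True then show ?thesis using Suc by blast
  next
    case False
    have "(s, t) \<in> (\<Union>p\<in>Q. {(u @ s, t) | u s t. u \<in> {u \<in> lists Sig. foldl \<delta> q u \<in> {p}} \<and> (s, t) \<in> Sn n p}
      \<union> {(s, v @ t) | v s t. v \<in> {v \<in> lists Gam. foldl \<delta> q v \<in> {p}} \<and> (s, t) \<in> Sn n p})"
      using Suc.prems(2) False by simp
    then obtain p where p: "p \<in> Q" and
      "(s, t) \<in> {(u @ s, t) | u s t. u \<in> {u \<in> lists Sig. foldl \<delta> q u \<in> {p}} \<and> (s, t) \<in> Sn n p}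
      \<union> {(s, v @ t) | v s t. v \<in> {v \<in> lists Gam. foldl \<delta> q v \<in> {p}} \<and> (s, t) \<in> Sn n p}"
      by (rule UN_E)
    then consider (L) u s' where "s = u @ s'" "u \<in> lists Sig" "foldl \<delta> q u = p" "(s', t) \<in> Sn n p"
      | (R) v t' where "t = v @ t'" "v \<in> lists Gam" "foldl \<delta> q v = p" "(s, t') \<in> Sn n p"
      by blast
    then show ?thesis
    proof cases
      case L
      obtain z where z: "z \<in> Lq p" "filter (\<lambda>x. x \<in> Sig) z = s'" "filter (\<lambda>x. x \<in> Gam) z = t"
        using Suc.IH[OF p L(4)] by blast
      have "u @ z \<in> Lq q" using z(1) L by (auto simp: Lq_def)
      then show ?thesis using z L pi_Sig po_Sig by (intro bexI[of _ "u @ z"]) auto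
    next
      case R
      obtain z where z: "z \<in> Lq p" "filter (\<lambda>x. x \<in> Sig) z = s" "filter (\<lambda>x. x \<in> Gam) z = t'"
        using Suc.IH[OF p R(4)] by blast
      have "v @ z \<in> Lq q" using z(1) R by (auto simp: Lq_def)
      then show ?thesis using z R pi_Gam po_Gam by (intro bexI[of _ "v @ z"]) auto
    qed
  qed
qed

lemma shift0_same: "shift Sig z = 0 \<Longrightarrow> \<forall>c\<in>set z. (c \<in> Sig) = (hd z \<in> Sig)"
proof (induction z)
  case Nil then show ?case by simp
next
  case (Cons a z)
  have e: "shift Sig z + (if z \<noteq> [] \<and> ((a \<in> Sig) \<noteq> (hd z \<in> Sig)) then 1 else 0) = 0"
    using Cons.prems by (simp only: shift_Cons)
  then have s0: "shift Sig z = 0" by simp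
  have h: "z \<noteq> [] \<longrightarrow> (a \<in> Sig) = (hd z \<in> Sig)"
  proof (rule ccontr)
    assume "\<not> (z \<noteq> [] \<longrightarrow> (a \<in> Sig) = (hd z \<in> Sig))"
    then have "z \<noteq> [] \<and> ((a \<in> Sig) \<noteq> (hd z \<in> Sig))" by simp
    then show False using e by simp
  qed
  have IH: "\<forall>c\<in>set z. (c \<in> Sig) = (hd z \<in> Sig)" using Cons.IH[OF s0] .
  show ?case
  proof (cases "z = []")
    case True then show ?thesis by simp
  next
    case False
    show ?thesis
    proof
      fix c assume "c \<in> set (a # z)"
      then have "c = a \<or> c \<in> set z" by simp
      then show "(c \<in> Sig) = (hd (a # z) \<in> Sig)"
      proof
        assume "c = a" then show ?thesis by simp
      next
        assume c: "c \<in> set z"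
        have "(c \<in> Sig) = (hd z \<in> Sig)" using IH c by blast
        moreover have "(a \<in> Sig) = (hd z \<in> Sig)" using h False by blast
        ultimately show ?thesis by simp
      qed
    qed
  qed
qed

lemma Sn_mono: "Sn n q \<subseteq> Sn (Suc n) q"
  unfolding Sn.simps(2) by (rule Un_upper1)

lemma Sn_single:
  assumes "z \<in> Lq q" "\<forall>c\<in>set z. (c \<in> Sig) = (hd z \<in> Sig)"
  shows "(filter (\<lambda>x. x \<in> Sig) z, filter (\<lambda>x. x \<in> Gam) z) \<in> Sn 0 q"
proof (cases "hd z \<in> Sig")
  case True
  then have "\<forall>c\<in>set z. c \<in> Sig" using assms(2) by blast
  then have zS: "z \<in> lists Sig" by (rule in_listsI)
  have "foldl \<delta> q z \<in> F" using assms(1) by (simp add: Lq_def)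
  then have "(z, []) \<in> Sn 0 q" using zS by simp
  then show ?thesis using pi_Sig[OF zS] po_Sig[OF zS] by simp
next
  case False
  have "z \<in> lists AA" using assms(1) by (simp add: Lq_def)
  then have "\<forall>c\<in>set z. c \<in> Gam" using assms(2) False by blast
  then have zG: "z \<in> lists Gam" by (rule in_listsI)
  have "foldl \<delta> q z \<in> F" using assms(1) by (simp add: Lq_def)
  then have "([], z) \<in> Sn 0 q" using zG by simp
  then show ?thesis using pi_Gam[OF zG] po_Gam[OF zG] by simp
qed

lemma Sn_0_le: "Sn 0 q \<subseteq> Sn n q"
proof (induction n)
  case 0 then show ?case by (rule order.refl)
next
  case (Suc n) then show ?case using Sn_mono[of n q] by (rule order_trans)
qed

lemma Sn_complete:
  "z \<in> Lq q \<Longrightarrow> q \<in> Q \<Longrightarrow> shift Sig z \<le> n \<Longrightarrow>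
    (filter (\<lambda>x. x \<in> Sig) z, filter (\<lambda>x. x \<in> Gam) z) \<in> Sn n q"
proof (induction n arbitrary: q z)
  case 0
  then have "shift Sig z = 0" by simp
  then show ?case using Sn_single[OF 0(1) shift0_same] by blast
next
  case (Suc n)
  show ?case
  proof (cases "\<forall>c\<in>set z. (c \<in> Sig) = (hd z \<in> Sig)")
    case True
    then show ?thesis using Sn_single[OF Suc.prems(1)] Sn_0_le by blast
  next
    case False
    define b where "b = (hd z \<in> Sig)"
    define u where "u = takeWhile (\<lambda>c. (c \<in> Sig) = b) z"
    define r where "r = dropWhile (\<lambda>c. (c \<in> Sig) = b) z"
    have zur: "z = u @ r" unfolding u_def r_def by simp
    have zne: "z \<noteq> []"
    proof
      assume "z = []" then show False using False by simp
    qed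
    have une: "u \<noteq> []" unfolding u_def b_def using zne by (cases z) auto
    have rne: "r \<noteq> []"
    proof
      assume "r = []"
      then have "\<forall>c\<in>set z. (c \<in> Sig) = b" unfolding r_def by (simp add: dropWhile_eq_Nil_conv)
      then show False using False unfolding b_def by blast
    qed
    have hdr: "(hd r \<in> Sig) \<noteq> b" unfolding r_def using rne hd_dropWhile[of "\<lambda>c. (c \<in> Sig) = b" z] r_def by simp
    have uall: "\<forall>c\<in>set u. (c \<in> Sig) = b"
    proof
      fix c assume "c \<in> set u"
      then show "(c \<in> Sig) = b" unfolding u_def by (rule set_takeWhileD[THEN conjunct2])
    qed
    have sh: "shift Sig z = shift Sig r + 1" unfolding zur by (rule shift_block[OF une uall rne hdr])
    have uA: "u \<in> lists AA" "r \<in> lists AA" using Suc.prems(1) zur by (auto simp: Lq_def)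
    define p where "p = foldl \<delta> q u"
    have pQ: "p \<in> Q" unfolding p_def using ds_closed Suc.prems(2) uA by blast
    have rL: "r \<in> Lq p" using Suc.prems(1) zur uA unfolding p_def by (auto simp: Lq_def)
    have IH: "(filter (\<lambda>x. x \<in> Sig) r, filter (\<lambda>x. x \<in> Gam) r) \<in> Sn n p"
      using Suc.IH[OF rL pQ] sh Suc.prems(3) by simp
    show ?thesis
    proof (cases b)
      case True
      then have "\<forall>c\<in>set u. c \<in> Sig" using uall by blast
      then have uS: "u \<in> lists Sig" by (rule in_listsI)
      have "(filter (\<lambda>x. x \<in> Sig) z, filter (\<lambda>x. x \<in> Gam) z) =
        (u @ filter (\<lambda>x. x \<in> Sig) r, filter (\<lambda>x. x \<in> Gam) r)"
        unfolding zur using pi_Sig[OF uS] po_Sig[OF uS] by simp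
      moreover have mem: "(u @ filter (\<lambda>x. x \<in> Sig) r, filter (\<lambda>x. x \<in> Gam) r) \<in>
        {(u @ s, t) | u s t. u \<in> {u \<in> lists Sig. foldl \<delta> q u \<in> {p}} \<and> (s, t) \<in> Sn n p}"
        using IH uS unfolding p_def by blast
      have "(u @ filter (\<lambda>x. x \<in> Sig) r, filter (\<lambda>x. x \<in> Gam) r) \<in> Sn (Suc n) q"
        unfolding Sn.simps(2) by (rule UnI2, rule UN_I[OF pQ], rule UnI1, rule mem)
      ultimately show ?thesis by simp
    next
      case False
      then have "\<forall>c\<in>set u. c \<in> Gam" using uall uA(1) by blast
      then have uG: "u \<in> lists Gam" by (rule in_listsI)
      have "(filter (\<lambda>x. x \<in> Sig) z, filter (\<lambda>x. x \<in> Gam) z) =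
        (filter (\<lambda>x. x \<in> Sig) r, u @ filter (\<lambda>x. x \<in> Gam) r)"
        unfolding zur using pi_Gam[OF uG] po_Gam[OF uG] by simp
      moreover have mem: "(filter (\<lambda>x. x \<in> Sig) r, u @ filter (\<lambda>x. x \<in> Gam) r) \<in>
        {(s, v @ t) | v s t. v \<in> {v \<in> lists Gam. foldl \<delta> q v \<in> {p}} \<and> (s, t) \<in> Sn n p}"
        using IH uG unfolding p_def by blast
      have "(filter (\<lambda>x. x \<in> Sig) r, u @ filter (\<lambda>x. x \<in> Gam) r) \<in> Sn (Suc n) q"
        unfolding Sn.simps(2) by (rule UnI2, rule UN_I[OF pQ], rule UnI2, rule mem)
      ultimately show ?thesis by simp
    qed
  qed
qed

definition Zc :: "nat \<Rightarrow> 'a list \<Rightarrow> 'a list \<Rightarrow> 'a list \<Rightarrow> 'a list \<Rightarrow> 'a list set" where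
  "Zc p' eI eI' eO eO' = {z \<in> lists AA. \<exists>z'\<in>Lq p'.
     eI' @ filter (\<lambda>x. x \<in> Sig) z' = eI @ filter (\<lambda>x. x \<in> Sig) z \<and>
     eO' @ filter (\<lambda>x. x \<in> Gam) z' = eO @ filter (\<lambda>x. x \<in> Gam) z}"

lemma reg_Zc:
  assumes "p' \<in> Gd" "eI' \<in> lists AA" "eO' \<in> lists AA"
  shows "reg AA (Zc p' eI eI' eO eO')"
proof -
  have pQ: "p' \<in> Q" and "bdd_above (shift Sig ` Lq p')" using assms(1) by (auto simp: Gd_def finite_shift_def)
  then obtain N where N: "\<And>z. z \<in> Lq p' \<Longrightarrow> shift Sig z \<le> N" by (auto simp: bdd_above_def)
  have eq: "{(filter (\<lambda>x. x \<in> Sig) z', filter (\<lambda>x. x \<in> Gam) z') | z'. z' \<in> Lq p'} = Sn N p'"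
  proof (intro set_eqI iffI)
    fix st assume "st \<in> {(filter (\<lambda>x. x \<in> Sig) z', filter (\<lambda>x. x \<in> Gam) z') | z'. z' \<in> Lq p'}"
    then show "st \<in> Sn N p'" using Sn_complete N pQ by blast
  next
    fix st assume "st \<in> Sn N p'"
    then show "st \<in> {(filter (\<lambda>x. x \<in> Sig) z', filter (\<lambda>x. x \<in> Gam) z') | z'. z' \<in> Lq p'}"
    proof -
      obtain z where "z \<in> Lq p'" "filter (\<lambda>x. x \<in> Sig) z = fst st" "filter (\<lambda>x. x \<in> Gam) z = snd st"
        using Sn_sound[OF pQ, of "fst st" "snd st" N] \<open>st \<in> Sn N p'\<close> by auto
      then have "st = (filter (\<lambda>x. x \<in> Sig) z, filter (\<lambda>x. x \<in> Gam) z)" by (cases st) simp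
      then show ?thesis using \<open>z \<in> Lq p'\<close> by blast
    qed
  qed
  have "Zc p' eI eI' eO eO' = {z \<in> lists AA. \<exists>(s, t)\<in>Sn N p'. eI' @ s = eI @ filter (\<lambda>x. x \<in> Sig) z
       \<and> eO' @ t = eO @ filter (\<lambda>x. x \<in> Gam) z}"
    unfolding Zc_def eq[symmetric] by blast
  then show ?thesis using reg_lift[OF recog_Sn[OF pQ] assms(2,3)] by simp
qed

end

definition okp :: "'a list \<Rightarrow> 'a list \<Rightarrow> 'a list \<Rightarrow> 'a list \<Rightarrow> 'a list \<Rightarrow> 'a list \<Rightarrow> bool" where
  "okp e e' b b' n n' \<longleftrightarrow> (\<exists>r. e @ b = r @ n \<and> e' @ b' = r @ n') \<and> (n = [] \<or> n' = [])"

lemma dtd: "a \<le> b \<Longrightarrow> b \<le> c \<Longrightarrow> c \<le> length V \<Longrightarrow> drop a (take b V) @ drop b (take c V) = drop a (take c V)"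
proof -
  assume h: "a \<le> b" "b \<le> c" "c \<le> length V"
  have "take c V = take b V @ drop b (take c V)"
    using h by (metis append_take_drop_id min.absorb1 take_take)
  then have "drop a (take c V) = drop a (take b V @ drop b (take c V))" by simp
  also have "\<dots> = drop a (take b V) @ drop b (take c V)" using h by simp
  finally show ?thesis by simp
qed

lemma okp_take:
  assumes "al \<le> al1" "be \<le> be1" "al1 \<le> length V" "be1 \<le> length V"
  shows "okp (drop be (take al V)) (drop al (take be V)) (drop al (take al1 V)) (drop be (take be1 V))
             (drop be1 (take al1 V)) (drop al1 (take be1 V))"
proof (cases "be \<le> al")
  case True
  show ?thesis
  proof (cases "be1 \<le> al1")
    case True2: True
    show ?thesis unfolding okp_def
      by (intro conjI exI[of _ "drop be (take be1 V)"])
         (use True True2 assms dtd[of be al al1 V] dtd[of be be1 al1 V] in simp_all)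
  next
    case False2: False
    show ?thesis unfolding okp_def
      by (intro conjI exI[of _ "drop be (take al1 V)"])
         (use True False2 assms dtd[of be al al1 V] dtd[of be al1 be1 V] in simp_all)
  qed
next
  case False
  show ?thesis
  proof (cases "be1 \<le> al1")
    case True2: True
    show ?thesis unfolding okp_def
      by (intro conjI exI[of _ "drop al (take be1 V)"])
         (use False True2 assms dtd[of al be be1 V] dtd[of al be1 al1 V] in simp_all)
  next
    case False2: False
    show ?thesis unfolding okp_def
      by (intro conjI exI[of _ "drop al (take al1 V)"])
         (use False False2 assms dtd[of al be be1 V] dtd[of al al1 be1 V] in simp_all)
  qed
qed

lemma drop_take_app: "al \<le> be \<Longrightarrow> be \<le> length V \<Longrightarrow> drop al (take be V) @ drop be V = drop al V"
proof -
  assume h: "al \<le> be" "be \<le> length V"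
  have "drop al V = drop al (take be V @ drop be V)" by simp
  also have "\<dots> = drop al (take be V) @ drop (al - length (take be V)) (drop be V)" by (rule drop_append)
  also have "al - length (take be V) = 0" using h by simp
  finally show ?thesis by simp
qed

lemma drop_take_swap:
  assumes "al \<le> length V" "be \<le> length V"
  shows "drop al (take be V) @ drop be V = drop be (take al V) @ drop al V"
proof (cases "al \<le> be")
  case True
  then show ?thesis using drop_take_app[OF True assms(2)] by simp
next
  case False
  then have "be \<le> al" by simp
  then show ?thesis using drop_take_app[OF _ assms(1)] False by simp
qed

lemma len_split: "Sig \<inter> Gam = {} \<Longrightarrow> x \<in> lists (Sig \<union> Gam) \<Longrightarrow>
   length x = length (filter (\<lambda>c. c \<in> Sig) x) + length (filter (\<lambda>c. c \<in> Gam) x)"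
  by (induction x) auto

lemma filter_Cons_split: "filter P (a # x) = filter P [a] @ filter P x"
  by simp

lemma take_len_app: "take (length u) (u @ v) = u"
  by simp

context setting
begin

definition Dm :: nat where "Dm = B + 1"

type_synonym 'b cfg = "nat \<times> nat \<times> 'b list \<times> 'b list \<times> 'b list \<times> 'b list"

definition St :: "'a cfg set" where
  "St = {(p, p', a, b, c, d). p \<in> Q \<and> p \<notin> Gd \<and> p' \<in> Q \<and> a \<in> lists AA \<and> b \<in> lists AA \<and> c \<in> lists AA \<and> d \<in> lists AA
     \<and> length a \<le> Dm \<and> length b \<le> Dm \<and> length c \<le> Dm \<and> length d \<le> Dm}"

lemma finite_St: "finite St"
proof -
  let ?L = "{xs. set xs \<subseteq> AA \<and> length xs \<le> Dm}"
  have fL: "finite ?L" using finite_lists_length_le[of AA Dm] finSig finGam by simp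
  have "St \<subseteq> Q \<times> Q \<times> ?L \<times> ?L \<times> ?L \<times> ?L" unfolding St_def by auto
  moreover have "finite (Q \<times> Q \<times> ?L \<times> ?L \<times> ?L \<times> ?L)" using finQ fL by simp
  ultimately show ?thesis by (rule finite_subset)
qed

definition stepP :: "'a cfg \<Rightarrow> 'a \<Rightarrow> 'a cfg \<Rightarrow> bool" where
  "stepP s x t \<longleftrightarrow> (case s of (p, p', a, b, c, d) \<Rightarrow> case t of (p2, p2', a2, b2, c2, d2) \<Rightarrow>
     (\<exists>y\<in>AA. p2 = \<delta> p x \<and> p2' = \<delta> p' y \<and>
        okp a b (filter (\<lambda>c. c \<in> Sig) [x]) (filter (\<lambda>c. c \<in> Sig) [y]) a2 b2 \<and>
        okp c d (filter (\<lambda>c. c \<in> Gam) [x]) (filter (\<lambda>c. c \<in> Gam) [y]) c2 d2) \<and> t \<in> St)"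

definition Dl :: "('a cfg \<times> 'a \<times> 'a cfg) set" where
  "Dl = {(s, x, t). stepP s x t}"

definition init0 :: "'a cfg" where "init0 = (q0, q0, [], [], [], [])"

definition P1 :: "'a cfg \<Rightarrow> 'a list set" where
  "P1 cf = {w \<in> lists AA. \<exists>s\<in>{init0} \<inter> St. \<exists>t\<in>{cf}. run Dl s w t}"

definition Fin1 :: "'a cfg set" where
  "Fin1 = {cf \<in> St. fst (snd cf) \<in> Gd}"

definition Zcf :: "'a cfg \<Rightarrow> 'a list set" where
  "Zcf cf = (case cf of (p, p', a, b, c, d) \<Rightarrow> Zc p' a b c d)"

definition CC :: "'a list set" where
  "CC = (\<Union>cf\<in>Fin1. cc (P1 cf) (Zcf cf))"

lemma reg_CC: "reg AA CC"
  unfolding CC_def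
proof (rule reg_UN)
  show "finite Fin1" unfolding Fin1_def using finite_St by simp
  fix cf assume cf: "cf \<in> Fin1"
  obtain p p' a b c d where cfe: "cf = (p, p', a, b, c, d)" by (cases cf) blast
  have hs: "p' \<in> Gd" "b \<in> lists AA" "d \<in> lists AA" using cf unfolding cfe Fin1_def St_def by auto
  have r1: "reg AA (P1 cf)" unfolding P1_def
    by (rule reg_nfa[OF finite_St]) (auto simp: Dl_def stepP_def split: prod.splits)
  have r2: "reg AA (Zcf cf)" unfolding Zcf_def cfe using reg_Zc[OF hs] by simp
  show "reg AA (cc (P1 cf) (Zcf cf))" by (rule reg_cc[OF r1 r2])
qed

lemma run_inv:
  "run Dl (p, p', a, b, c, d) x (P, P', A2, B2, C2, D2) \<Longrightarrow>
   \<exists>x'\<in>lists AA. length x' = length x \<and> P = foldl \<delta> p x \<and> P' = foldl \<delta> p' x' \<and>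
     (\<exists>r. a @ filter (\<lambda>c. c \<in> Sig) x = r @ A2 \<and> b @ filter (\<lambda>c. c \<in> Sig) x' = r @ B2) \<and>
     (\<exists>r. c @ filter (\<lambda>c. c \<in> Gam) x = r @ C2 \<and> d @ filter (\<lambda>c. c \<in> Gam) x' = r @ D2)"
proof (induction x arbitrary: p p' a b c d)
  case Nil
  then show ?case by (intro bexI[of _ "[]"]) auto
next
  case (Cons x0 x)
  obtain s' where s': "(( p, p', a, b, c, d), x0, s') \<in> Dl" "run Dl s' x (P, P', A2, B2, C2, D2)"
    using Cons.prems by auto
  obtain p2 p2' a2 b2 c2 d2 where s'e: "s' = (p2, p2', a2, b2, c2, d2)" by (cases s') blast
  obtain y where y: "y \<in> AA" "p2 = \<delta> p x0" "p2' = \<delta> p' y"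
    "okp a b (filter (\<lambda>c. c \<in> Sig) [x0]) (filter (\<lambda>c. c \<in> Sig) [y]) a2 b2"
    "okp c d (filter (\<lambda>c. c \<in> Gam) [x0]) (filter (\<lambda>c. c \<in> Gam) [y]) c2 d2"
    using s'(1) unfolding s'e Dl_def stepP_def by auto
  obtain r1 where r1: "a @ filter (\<lambda>c. c \<in> Sig) [x0] = r1 @ a2" "b @ filter (\<lambda>c. c \<in> Sig) [y] = r1 @ b2"
    using y(4) unfolding okp_def by blast
  obtain r1' where r1': "c @ filter (\<lambda>c. c \<in> Gam) [x0] = r1' @ c2" "d @ filter (\<lambda>c. c \<in> Gam) [y] = r1' @ d2"
    using y(5) unfolding okp_def by blast
  obtain x'' where x'': "x'' \<in> lists AA" "length x'' = length x" "P = foldl \<delta> p2 x" "P' = foldl \<delta> p2' x''"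
    "\<exists>r. a2 @ filter (\<lambda>c. c \<in> Sig) x = r @ A2 \<and> b2 @ filter (\<lambda>c. c \<in> Sig) x'' = r @ B2"
    "\<exists>r. c2 @ filter (\<lambda>c. c \<in> Gam) x = r @ C2 \<and> d2 @ filter (\<lambda>c. c \<in> Gam) x'' = r @ D2"
    using Cons.IH[of p2 p2' a2 b2 c2 d2] s'(2) unfolding s'e by blast
  obtain r2 where r2: "a2 @ filter (\<lambda>c. c \<in> Sig) x = r2 @ A2" "b2 @ filter (\<lambda>c. c \<in> Sig) x'' = r2 @ B2"
    using x''(5) by blast
  obtain r2' where r2': "c2 @ filter (\<lambda>c. c \<in> Gam) x = r2' @ C2" "d2 @ filter (\<lambda>c. c \<in> Gam) x'' = r2' @ D2"
    using x''(6) by blast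
  have e1: "a @ filter (\<lambda>c. c \<in> Sig) (x0 # x) = (r1 @ r2) @ A2"
    using r1(1) r2(1) by (metis append.assoc filter_Cons_split)
  have e2: "b @ filter (\<lambda>c. c \<in> Sig) (y # x'') = (r1 @ r2) @ B2"
    using r1(2) r2(2) by (metis append.assoc filter_Cons_split)
  have e3: "c @ filter (\<lambda>c. c \<in> Gam) (x0 # x) = (r1' @ r2') @ C2"
    using r1'(1) r2'(1) by (metis append.assoc filter_Cons_split)
  have e4: "d @ filter (\<lambda>c. c \<in> Gam) (y # x'') = (r1' @ r2') @ D2"
    using r1'(2) r2'(2) by (metis append.assoc filter_Cons_split)
  show ?case
    by (rule bexI[of _ "y # x''"]) (use x'' y e1 e2 e3 e4 in auto)
qed

definition bad :: "'a list \<Rightarrow> bool" where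
  "bad w \<longleftrightarrow> (\<exists>w'\<in>Lq q0. sem Sig Gam w' = sem Sig Gam w \<and>
     (\<exists>i\<le>length w. foldl \<delta> q0 (take i w') \<in> Gd \<and> foldl \<delta> q0 (take i w) \<notin> Gd))"

lemma CC_sound:
  assumes "w \<in> CC"
  shows "bad w"
proof -
  obtain cf where cf: "cf \<in> Fin1" "w \<in> cc (P1 cf) (Zcf cf)" using assms unfolding CC_def by blast
  obtain P P' A2 B2 C2 D2 where cfe: "cf = (P, P', A2, B2, C2, D2)" by (cases cf) blast
  obtain x z where xz: "w = x @ z" "x \<in> P1 cf" "z \<in> Zcf cf" using cf(2) unfolding cc_def by blast
  have xA: "x \<in> lists AA" and r: "run Dl init0 x cf" using xz(2) unfolding P1_def by auto
  obtain x' where x': "x' \<in> lists AA" "length x' = length x" "P = foldl \<delta> q0 x" "P' = foldl \<delta> q0 x'"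
     "\<exists>r. filter (\<lambda>c. c \<in> Sig) x = r @ A2 \<and> filter (\<lambda>c. c \<in> Sig) x' = r @ B2"
     "\<exists>r. filter (\<lambda>c. c \<in> Gam) x = r @ C2 \<and> filter (\<lambda>c. c \<in> Gam) x' = r @ D2"
    using run_inv[of q0 q0 "[]" "[]" "[]" "[]" x P P' A2 B2 C2 D2] r unfolding init0_def cfe by auto
  obtain rI where rI: "filter (\<lambda>c. c \<in> Sig) x = rI @ A2" "filter (\<lambda>c. c \<in> Sig) x' = rI @ B2" using x'(5) by blast
  obtain rO where rO: "filter (\<lambda>c. c \<in> Gam) x = rO @ C2" "filter (\<lambda>c. c \<in> Gam) x' = rO @ D2" using x'(6) by blast
  obtain z' where z': "z \<in> lists AA" "z' \<in> Lq P'" "B2 @ filter (\<lambda>c. c \<in> Sig) z' = A2 @ filter (\<lambda>c. c \<in> Sig) z"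
    "D2 @ filter (\<lambda>c. c \<in> Gam) z' = C2 @ filter (\<lambda>c. c \<in> Gam) z"
    using xz(3) unfolding Zcf_def cfe Zc_def by auto
  have inSt: "P \<notin> Gd" "P' \<in> Gd" using cf(1) unfolding Fin1_def cfe St_def by auto
  define w' where "w' = x' @ z'"
  have w'T: "w' \<in> Lq q0" unfolding w'_def using z'(2) x' by (auto simp: Lq_def)
  have "filter (\<lambda>c. c \<in> Sig) w' = filter (\<lambda>c. c \<in> Sig) w"
    unfolding w'_def xz(1) using rI z'(3) by simp
  moreover have "filter (\<lambda>c. c \<in> Gam) w' = filter (\<lambda>c. c \<in> Gam) w"
    unfolding w'_def xz(1) using rO z'(4) by simp
  ultimately have semeq: "sem Sig Gam w' = sem Sig Gam w" by (simp add: sem_def proj_i_def proj_o_def)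
  have "take (length x) w' = x'" unfolding w'_def using x'(2) by simp
  moreover have "take (length x) w = x" unfolding xz(1) by simp
  ultimately have "foldl \<delta> q0 (take (length x) w') \<in> Gd \<and> foldl \<delta> q0 (take (length x) w) \<notin> Gd"
    using inSt x'(3,4) by simp
  moreover have "length x \<le> length w" unfolding xz(1) by simp
  ultimately show ?thesis unfolding bad_def using w'T semeq by blast
qed

end

context setting
begin

lemma lists_take: "w \<in> lists AA \<Longrightarrow> take j w \<in> lists AA"
  by (auto dest: in_set_takeD)

lemma lists_drop: "w \<in> lists AA \<Longrightarrow> drop j w \<in> lists AA"
  by (auto dest: in_set_dropD)

lemma notGd_prefix:
  assumes "w \<in> lists AA" "j \<le> i" "foldl \<delta> q0 (take i w) \<notin> Gd"
  shows "foldl \<delta> q0 (take j w) \<notin> Gd"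
proof
  assume G: "foldl \<delta> q0 (take j w) \<in> Gd"
  have tt: "take j (take i w) = take j w" using assms(2) by (simp add: min_def)
  have e: "take i w = take j w @ drop j (take i w)"
    using append_take_drop_id[of j "take i w"] unfolding tt by simp
  have "drop j (take i w) \<in> lists AA" using assms(1) lists_take lists_drop by blast
  then have "foldl \<delta> (foldl \<delta> q0 (take j w)) (drop j (take i w)) \<in> Gd" by (rule Gd_up[OF G])
  then have "foldl \<delta> q0 (take i w) \<in> Gd" by (subst e) (simp only: foldl_append)
  then show False using assms(3) by blast
qed

lemma St_iff: "(p, p', a, b, c, d) \<in> St \<longleftrightarrow> p \<in> Q \<and> p \<notin> Gd \<and> p' \<in> Q \<and> a \<in> lists AA \<and> b \<in> lists AA \<and> c \<in> lists AA \<and> d \<in> lists AA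
     \<and> length a \<le> Dm \<and> length b \<le> Dm \<and> length c \<le> Dm \<and> length d \<le> Dm"
  unfolding St_def by (simp only: mem_Collect_eq prod.case)

lemma Dl_iff: "(s, x, t) \<in> Dl \<longleftrightarrow> stepP s x t"
  unfolding Dl_def by simp

lemma stepP_iff: "stepP (p, p', a, b, c, d) x (p2, p2', a2, b2, c2, d2) \<longleftrightarrow>
     (\<exists>y\<in>AA. p2 = \<delta> p x \<and> p2' = \<delta> p' y \<and>
        okp a b (filter (\<lambda>c. c \<in> Sig) [x]) (filter (\<lambda>c. c \<in> Sig) [y]) a2 b2 \<and>
        okp c d (filter (\<lambda>c. c \<in> Gam) [x]) (filter (\<lambda>c. c \<in> Gam) [y]) c2 d2) \<and> (p2, p2', a2, b2, c2, d2) \<in> St"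
  unfolding stepP_def by (simp only: prod.case)

lemma split_help: "take a2 V = take a1 V @ s \<Longrightarrow> a1 \<le> length V \<Longrightarrow> s = drop a1 (take a2 V)"
  by simp

lemma split_help2: "V = take a V @ s \<Longrightarrow> a \<le> length V \<Longrightarrow> s = drop a V"
  by (metis append_take_drop_id same_append_eq)

lemma pref_take: "filter P x = filter P (take j x) @ filter P (drop j x)"
  by (metis append_take_drop_id filter_append)

lemma CC_complete:
  assumes wT: "w \<in> Lq q0" and b: "bad w"
  shows "w \<in> CC"
proof -
  obtain w' i where w'T: "w' \<in> Lq q0" and semeq: "sem Sig Gam w' = sem Sig Gam w"
    and i: "i \<le> length w" "foldl \<delta> q0 (take i w') \<in> Gd" "foldl \<delta> q0 (take i w) \<notin> Gd"
    using b unfolding bad_def by blast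
  have wA: "w \<in> lists AA" and w'A: "w' \<in> lists AA" using wT w'T by (auto simp: Lq_def)
  define V where "V = filter (\<lambda>c. c \<in> Sig) w"
  define U where "U = filter (\<lambda>c. c \<in> Gam) w"
  have V': "filter (\<lambda>c. c \<in> Sig) w' = V" and U': "filter (\<lambda>c. c \<in> Gam) w' = U"
    using semeq unfolding V_def U_def sem_def proj_i_def proj_o_def by auto
  have lenw': "length w' = length w"
    using len_split[OF disj wA] len_split[OF disj w'A] V' U' unfolding V_def U_def by simp
  define i0 where "i0 = (LEAST j. foldl \<delta> q0 (take j w') \<in> Gd)"
  have i0G: "foldl \<delta> q0 (take i0 w') \<in> Gd" unfolding i0_def by (rule LeastI[of _ i]) (rule i(2))
  have i0le: "i0 \<le> i" unfolding i0_def by (rule Least_le) (rule i(2))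
  have i0min: "foldl \<delta> q0 (take j w') \<notin> Gd" if "j < i0" for j
    using not_less_Least[of j "\<lambda>j. foldl \<delta> q0 (take j w') \<in> Gd"] that unfolding i0_def by blast
  have nGw: "foldl \<delta> q0 (take j w) \<notin> Gd" if "j \<le> i0" for j
    using notGd_prefix[OF wA _ i(3)] that i0le by simp
  define al where "al = (\<lambda>j. length (filter (\<lambda>c. c \<in> Sig) (take j w)))"
  define be where "be = (\<lambda>j. length (filter (\<lambda>c. c \<in> Sig) (take j w')))"
  define ga where "ga = (\<lambda>j. length (filter (\<lambda>c. c \<in> Gam) (take j w)))"
  define et where "et = (\<lambda>j. length (filter (\<lambda>c. c \<in> Gam) (take j w')))"
  have tV: "filter (\<lambda>c. c \<in> Sig) (take j w) = take (al j) V" for j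
  proof -
    have "V = filter (\<lambda>c. c \<in> Sig) (take j w) @ filter (\<lambda>c. c \<in> Sig) (drop j w)" unfolding V_def by (rule pref_take)
    then show ?thesis unfolding al_def by simp
  qed
  have tV': "filter (\<lambda>c. c \<in> Sig) (take j w') = take (be j) V" for j
  proof -
    have "V = filter (\<lambda>c. c \<in> Sig) (take j w') @ filter (\<lambda>c. c \<in> Sig) (drop j w')" unfolding V'[symmetric] by (rule pref_take)
    then show ?thesis unfolding be_def by simp
  qed
  have tU: "filter (\<lambda>c. c \<in> Gam) (take j w) = take (ga j) U" for j
  proof -
    have "U = filter (\<lambda>c. c \<in> Gam) (take j w) @ filter (\<lambda>c. c \<in> Gam) (drop j w)" unfolding U_def by (rule pref_take)
    then show ?thesis unfolding ga_def by simp
  qed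
  have tU': "filter (\<lambda>c. c \<in> Gam) (take j w') = take (et j) U" for j
  proof -
    have "U = filter (\<lambda>c. c \<in> Gam) (take j w') @ filter (\<lambda>c. c \<in> Gam) (drop j w')" unfolding U'[symmetric] by (rule pref_take)
    then show ?thesis unfolding et_def by simp
  qed
  have alV: "al j \<le> length V" for j
  proof -
    have "V = filter (\<lambda>c. c \<in> Sig) (take j w) @ filter (\<lambda>c. c \<in> Sig) (drop j w)" unfolding V_def by (rule pref_take)
    then have "length V = al j + length (filter (\<lambda>c. c \<in> Sig) (drop j w))" unfolding al_def by (metis length_append)
    then show ?thesis by simp
  qed
  have beV: "be j \<le> length V" for j
  proof -
    have "V = filter (\<lambda>c. c \<in> Sig) (take j w') @ filter (\<lambda>c. c \<in> Sig) (drop j w')" unfolding V'[symmetric] by (rule pref_take)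
    then have "length V = be j + length (filter (\<lambda>c. c \<in> Sig) (drop j w'))" unfolding be_def by (metis length_append)
    then show ?thesis by simp
  qed
  have gaU: "ga j \<le> length U" for j
  proof -
    have "U = filter (\<lambda>c. c \<in> Gam) (take j w) @ filter (\<lambda>c. c \<in> Gam) (drop j w)" unfolding U_def by (rule pref_take)
    then have "length U = ga j + length (filter (\<lambda>c. c \<in> Gam) (drop j w))" unfolding ga_def by (metis length_append)
    then show ?thesis by simp
  qed
  have etU: "et j \<le> length U" for j
  proof -
    have "U = filter (\<lambda>c. c \<in> Gam) (take j w') @ filter (\<lambda>c. c \<in> Gam) (drop j w')" unfolding U'[symmetric] by (rule pref_take)
    then have "length U = et j + length (filter (\<lambda>c. c \<in> Gam) (drop j w'))" unfolding et_def by (metis length_append)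
    then show ?thesis by simp
  qed
  have sumw: "al j + ga j = j" if "j \<le> length w" for j
    using len_split[OF disj lists_take[OF wA, of j]] that unfolding al_def ga_def by simp
  have sumw': "be j + et j = j" if "j \<le> length w" for j
    using len_split[OF disj lists_take[OF w'A, of j]] that lenw' unfolding be_def et_def by simp
  have difw: "dif Sig Gam (take j w) = int (al j) - int (ga j)" for j
    unfolding dif_def al_def ga_def by simp
  have difw': "dif Sig Gam (take j w') = int (be j) - int (et j)" for j
    unfolding dif_def be_def et_def by simp
  have bw: "\<bar>int (al j) - int (ga j)\<bar> \<le> int B" if "j \<le> i0" for j
    using lag_bound[OF lists_take[OF wA] nGw[OF that]] difw by simp
  have bw': "\<bar>int (be j) - int (et j)\<bar> \<le> int B + 1" if "j \<le> i0" for j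
  proof (cases "j < i0")
    case True
    then show ?thesis using lag_bound[OF lists_take[OF w'A] i0min[OF True]] difw' by simp
  next
    case False
    then have j: "j = i0" using that by simp
    show ?thesis
    proof (cases j)
      case 0 then show ?thesis unfolding be_def et_def by simp
    next
      case (Suc k)
      have k: "k < i0" using j Suc by simp
      have "k < length w'" using k i0le i(1) lenw' by simp
      then have "take j w' = take k w' @ [w' ! k]" using Suc by (simp add: take_Suc_conv_app_nth)
      then have "dif Sig Gam (take j w') = dif Sig Gam (take k w') + dif Sig Gam [w' ! k]" by simp
      moreover have "\<bar>dif Sig Gam [w' ! k]\<bar> \<le> 1" using dif_bound[of Sig Gam "[w' ! k]"] by simp
      moreover have "\<bar>dif Sig Gam (take k w')\<bar> \<le> int B" using lag_bound[OF lists_take[OF w'A] i0min[OF k]] .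
      ultimately show ?thesis using difw'[of j] by linarith
    qed
  qed
  define cfg where "cfg = (\<lambda>j. (foldl \<delta> q0 (take j w), foldl \<delta> q0 (take j w'),
      drop (be j) (take (al j) V), drop (al j) (take (be j) V),
      drop (et j) (take (ga j) U), drop (ga j) (take (et j) U)))"
  have VA: "V \<in> lists AA" "U \<in> lists AA" unfolding V_def U_def using wA by auto
  have cfgSt: "cfg j \<in> St" if "j \<le> i0" for j
  proof -
    have jw: "j \<le> length w" using that i0le i(1) by simp
    have s1: "al j + ga j = be j + et j" using sumw[OF jw] sumw'[OF jw] by simp
    have d: "int (al j) - int (be j) \<le> int Dm" "int (be j) - int (al j) \<le> int Dm"
            "int (ga j) - int (et j) \<le> int Dm" "int (et j) - int (ga j) \<le> int Dm"
      using bw[OF that] bw'[OF that] s1 unfolding Dm_def by linarith+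
    have l: "length (drop (be j) (take (al j) V)) \<le> Dm" "length (drop (al j) (take (be j) V)) \<le> Dm"
            "length (drop (et j) (take (ga j) U)) \<le> Dm" "length (drop (ga j) (take (et j) U)) \<le> Dm"
      using d alV[of j] beV[of j] gaU[of j] etU[of j] by simp_all
    have m: "drop (be j) (take (al j) V) \<in> lists AA" "drop (al j) (take (be j) V) \<in> lists AA"
            "drop (et j) (take (ga j) U) \<in> lists AA" "drop (ga j) (take (et j) U) \<in> lists AA"
      by (rule lists_drop[OF lists_take[OF VA(1)]] lists_drop[OF lists_take[OF VA(2)]])+
    have q: "foldl \<delta> q0 (take j w) \<in> Q" "foldl \<delta> q0 (take j w') \<in> Q"
      by (rule ds_closed[OF q0Q lists_take[OF wA]], rule ds_closed[OF q0Q lists_take[OF w'A]])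
    show ?thesis unfolding cfg_def St_iff using l m q nGw[OF that] by (intro conjI)
  qed
  have step: "(cfg j, w ! j, cfg (Suc j)) \<in> Dl" if "j < i0" for j
  proof -
    have jw: "j < length w" using that i0le i(1) by simp
    have tw: "take (Suc j) w = take j w @ [w ! j]" using jw by (simp add: take_Suc_conv_app_nth)
    have tw': "take (Suc j) w' = take j w' @ [w' ! j]" using jw lenw' by (simp add: take_Suc_conv_app_nth)
    have "w' ! j \<in> set w'" using jw lenw' by simp
    then have yA: "w' ! j \<in> AA" using w'A by blast
    have sx: "filter (\<lambda>c. c \<in> Sig) [w ! j] = drop (al j) (take (al (Suc j)) V)"
    proof (rule split_help)
      have "take (al (Suc j)) V = filter (\<lambda>c. c \<in> Sig) (take (Suc j) w)" by (rule tV[symmetric])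
      also have "\<dots> = filter (\<lambda>c. c \<in> Sig) (take j w) @ filter (\<lambda>c. c \<in> Sig) [w ! j]" unfolding tw by (rule filter_append)
      also have "\<dots> = take (al j) V @ filter (\<lambda>c. c \<in> Sig) [w ! j]" unfolding tV ..
      finally show "take (al (Suc j)) V = take (al j) V @ filter (\<lambda>c. c \<in> Sig) [w ! j]" .
      show "al j \<le> length V" by (rule alV)
    qed
    have sy: "filter (\<lambda>c. c \<in> Sig) [w' ! j] = drop (be j) (take (be (Suc j)) V)"
    proof (rule split_help)
      have "take (be (Suc j)) V = filter (\<lambda>c. c \<in> Sig) (take (Suc j) w')" by (rule tV'[symmetric])
      also have "\<dots> = filter (\<lambda>c. c \<in> Sig) (take j w') @ filter (\<lambda>c. c \<in> Sig) [w' ! j]" unfolding tw' by (rule filter_append)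
      also have "\<dots> = take (be j) V @ filter (\<lambda>c. c \<in> Sig) [w' ! j]" unfolding tV' ..
      finally show "take (be (Suc j)) V = take (be j) V @ filter (\<lambda>c. c \<in> Sig) [w' ! j]" .
      show "be j \<le> length V" by (rule beV)
    qed
    have ox: "filter (\<lambda>c. c \<in> Gam) [w ! j] = drop (ga j) (take (ga (Suc j)) U)"
    proof (rule split_help)
      have "take (ga (Suc j)) U = filter (\<lambda>c. c \<in> Gam) (take (Suc j) w)" by (rule tU[symmetric])
      also have "\<dots> = filter (\<lambda>c. c \<in> Gam) (take j w) @ filter (\<lambda>c. c \<in> Gam) [w ! j]" unfolding tw by (rule filter_append)
      also have "\<dots> = take (ga j) U @ filter (\<lambda>c. c \<in> Gam) [w ! j]" unfolding tU ..
      finally show "take (ga (Suc j)) U = take (ga j) U @ filter (\<lambda>c. c \<in> Gam) [w ! j]" .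
      show "ga j \<le> length U" by (rule gaU)
    qed
    have oy: "filter (\<lambda>c. c \<in> Gam) [w' ! j] = drop (et j) (take (et (Suc j)) U)"
    proof (rule split_help)
      have "take (et (Suc j)) U = filter (\<lambda>c. c \<in> Gam) (take (Suc j) w')" by (rule tU'[symmetric])
      also have "\<dots> = filter (\<lambda>c. c \<in> Gam) (take j w') @ filter (\<lambda>c. c \<in> Gam) [w' ! j]" unfolding tw' by (rule filter_append)
      also have "\<dots> = take (et j) U @ filter (\<lambda>c. c \<in> Gam) [w' ! j]" unfolding tU' ..
      finally show "take (et (Suc j)) U = take (et j) U @ filter (\<lambda>c. c \<in> Gam) [w' ! j]" .
      show "et j \<le> length U" by (rule etU)
    qed
    have mono: "al j \<le> al (Suc j)" "be j \<le> be (Suc j)" "ga j \<le> ga (Suc j)" "et j \<le> et (Suc j)"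
      unfolding al_def be_def ga_def et_def tw tw' by (simp_all only: filter_append length_append le_add1)
    have ok1: "okp (drop (be j) (take (al j) V)) (drop (al j) (take (be j) V))
        (filter (\<lambda>c. c \<in> Sig) [w ! j]) (filter (\<lambda>c. c \<in> Sig) [w' ! j])
        (drop (be (Suc j)) (take (al (Suc j)) V)) (drop (al (Suc j)) (take (be (Suc j)) V))"
      unfolding sx sy by (rule okp_take[OF mono(1,2) alV beV])
    have ok2: "okp (drop (et j) (take (ga j) U)) (drop (ga j) (take (et j) U))
        (filter (\<lambda>c. c \<in> Gam) [w ! j]) (filter (\<lambda>c. c \<in> Gam) [w' ! j])
        (drop (et (Suc j)) (take (ga (Suc j)) U)) (drop (ga (Suc j)) (take (et (Suc j)) U))"
      unfolding ox oy by (rule okp_take[OF mono(3,4) gaU etU])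
    have d1: "foldl \<delta> q0 (take (Suc j) w) = \<delta> (foldl \<delta> q0 (take j w)) (w ! j)" using tw by simp
    have d2: "foldl \<delta> q0 (take (Suc j) w') = \<delta> (foldl \<delta> q0 (take j w')) (w' ! j)" using tw' by simp
    have cS: "cfg (Suc j) \<in> St" using cfgSt that by simp
    show ?thesis unfolding cfg_def Dl_iff stepP_iff
    proof (intro conjI bexI[of _ "w' ! j"])
      show "(foldl \<delta> q0 (take (Suc j) w), foldl \<delta> q0 (take (Suc j) w'),
        drop (be (Suc j)) (take (al (Suc j)) V), drop (al (Suc j)) (take (be (Suc j)) V),
        drop (et (Suc j)) (take (ga (Suc j)) U), drop (ga (Suc j)) (take (et (Suc j)) U)) \<in> St"
        using cS unfolding cfg_def .
    qed (rule d1 d2 ok1 ok2 yA)+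
  qed
  have runs: "run Dl (cfg 0) (take j w) (cfg j)" if "j \<le> i0" for j
    using that
  proof (induction j)
    case 0 then show ?case by simp
  next
    case (Suc j)
    have jw: "j < length w" using Suc.prems i0le i(1) by simp
    have tSj: "take (Suc j) w = take j w @ [w ! j]" using jw by (simp add: take_Suc_conv_app_nth)
    have "run Dl (cfg 0) (take j w) (cfg j)" using Suc.IH Suc.prems by simp
    moreover have "(cfg j, w ! j, cfg (Suc j)) \<in> Dl" using step Suc.prems by simp
    ultimately have "run Dl (cfg 0) (take j w @ [w ! j]) (cfg (Suc j))"
      using run_snoc[of Dl "cfg 0" "take j w" "w ! j" "cfg (Suc j)"] by blast
    then show ?case using tSj by simp
  qed
  have c0: "cfg 0 = init0" unfolding cfg_def init0_def al_def be_def ga_def et_def by simp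
  have xP: "take i0 w \<in> P1 (cfg i0)"
    unfolding P1_def using runs[of i0] c0 cfgSt[of 0] lists_take[OF wA] by auto
  have cfF: "cfg i0 \<in> Fin1" unfolding Fin1_def using cfgSt[of i0] i0G unfolding cfg_def by simp
  have zZ: "drop i0 w \<in> Zcf (cfg i0)"
  proof -
    have dA: "drop i0 w \<in> lists AA" using lists_drop[OF wA] .
    have z'L: "drop i0 w' \<in> Lq (foldl \<delta> q0 (take i0 w'))"
    proof -
      have "foldl \<delta> q0 w' \<in> F" using w'T by (simp add: Lq_def)
      then have "foldl \<delta> (foldl \<delta> q0 (take i0 w')) (drop i0 w') \<in> F"
        by (subst foldl_append[symmetric]) simp
      then show ?thesis using lists_drop[OF w'A] by (simp add: Lq_def)
    qed
    have pz: "filter (\<lambda>c. c \<in> Sig) (drop i0 w) = drop (al i0) V"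
    proof (rule split_help2)
      have "V = filter (\<lambda>c. c \<in> Sig) w" unfolding V_def by simp
      also have "\<dots> = filter (\<lambda>c. c \<in> Sig) (take i0 w) @ filter (\<lambda>c. c \<in> Sig) (drop i0 w)" by (rule pref_take)
      also have "\<dots> = take (al i0) V @ filter (\<lambda>c. c \<in> Sig) (drop i0 w)" unfolding tV ..
      finally show "V = take (al i0) V @ filter (\<lambda>c. c \<in> Sig) (drop i0 w)" .
      show "al i0 \<le> length V" by (rule alV)
    qed
    have pz': "filter (\<lambda>c. c \<in> Sig) (drop i0 w') = drop (be i0) V"
    proof (rule split_help2)
      have "V = filter (\<lambda>c. c \<in> Sig) w'" using V' by simp
      also have "\<dots> = filter (\<lambda>c. c \<in> Sig) (take i0 w') @ filter (\<lambda>c. c \<in> Sig) (drop i0 w')" by (rule pref_take)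
      also have "\<dots> = take (be i0) V @ filter (\<lambda>c. c \<in> Sig) (drop i0 w')" unfolding tV' ..
      finally show "V = take (be i0) V @ filter (\<lambda>c. c \<in> Sig) (drop i0 w')" .
      show "be i0 \<le> length V" by (rule beV)
    qed
    have oz: "filter (\<lambda>c. c \<in> Gam) (drop i0 w) = drop (ga i0) U"
    proof (rule split_help2)
      have "U = filter (\<lambda>c. c \<in> Gam) w" unfolding U_def by simp
      also have "\<dots> = filter (\<lambda>c. c \<in> Gam) (take i0 w) @ filter (\<lambda>c. c \<in> Gam) (drop i0 w)" by (rule pref_take)
      also have "\<dots> = take (ga i0) U @ filter (\<lambda>c. c \<in> Gam) (drop i0 w)" unfolding tU ..
      finally show "U = take (ga i0) U @ filter (\<lambda>c. c \<in> Gam) (drop i0 w)" .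
      show "ga i0 \<le> length U" by (rule gaU)
    qed
    have oz': "filter (\<lambda>c. c \<in> Gam) (drop i0 w') = drop (et i0) U"
    proof (rule split_help2)
      have "U = filter (\<lambda>c. c \<in> Gam) w'" using U' by simp
      also have "\<dots> = filter (\<lambda>c. c \<in> Gam) (take i0 w') @ filter (\<lambda>c. c \<in> Gam) (drop i0 w')" by (rule pref_take)
      also have "\<dots> = take (et i0) U @ filter (\<lambda>c. c \<in> Gam) (drop i0 w')" unfolding tU' ..
      finally show "U = take (et i0) U @ filter (\<lambda>c. c \<in> Gam) (drop i0 w')" .
      show "et i0 \<le> length U" by (rule etU)
    qed
    have "drop (al i0) (take (be i0) V) @ filter (\<lambda>c. c \<in> Sig) (drop i0 w')
        = drop (be i0) (take (al i0) V) @ filter (\<lambda>c. c \<in> Sig) (drop i0 w)"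
      unfolding pz pz' by (rule drop_take_swap[OF alV beV])
    moreover have "drop (ga i0) (take (et i0) U) @ filter (\<lambda>c. c \<in> Gam) (drop i0 w')
        = drop (et i0) (take (ga i0) U) @ filter (\<lambda>c. c \<in> Gam) (drop i0 w)"
      unfolding oz oz' by (rule drop_take_swap[OF gaU etU])
    ultimately show ?thesis unfolding Zcf_def cfg_def Zc_def using dA z'L by auto
  qed
  have "w = take i0 w @ drop i0 w" by simp
  then have "w \<in> cc (P1 (cfg i0)) (Zcf (cfg i0))" unfolding cc_def using xP zZ by blast
  then show ?thesis unfolding CC_def using cfF by blast
qed

end

context setting
begin

lemma minsync_char:
  assumes wT: "w \<in> Lq q0"
  shows "w \<in> minsync Sig Gam (Lq q0) (Lq q0) \<longleftrightarrow> \<not> bad w"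
proof
  assume m: "w \<in> minsync Sig Gam (Lq q0) (Lq q0)"
  show "\<not> bad w"
  proof
    assume "bad w"
    then obtain w' i where w'T: "w' \<in> Lq q0" and semeq: "sem Sig Gam w' = sem Sig Gam w"
      and i: "i \<le> length w" "foldl \<delta> q0 (take i w') \<in> Gd" "foldl \<delta> q0 (take i w) \<notin> Gd"
      unfolding bad_def by blast
    have "preceq Sig Gam (Lq q0) w w'" using m w'T semeq unfolding minsync_def by blast
    then have "RegFS Sig Gam (lquot (take i w') (Lq q0)) \<longrightarrow> RegFS Sig Gam (lquot (take i w) (Lq q0))"
      using i(1) unfolding preceq_def by blast
    moreover have "take i w \<in> lists AA" "take i w' \<in> lists AA"
      using wT w'T lists_take by (auto simp: Lq_def)
    ultimately show False using RegFS_iff i(2,3) by blast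
  qed
next
  assume nb: "\<not> bad w"
  have "sem Sig Gam w \<in> sem Sig Gam ` Lq q0" using wT by blast
  moreover have "preceq Sig Gam (Lq q0) w w'" if w'T: "w' \<in> Lq q0" "sem Sig Gam w' = sem Sig Gam w" for w'
  proof -
    have "RegFS Sig Gam (lquot (take i w) (Lq q0))"
      if "i \<le> length w" "RegFS Sig Gam (lquot (take i w') (Lq q0))" for i
    proof -
      have tA: "take i w \<in> lists AA" "take i w' \<in> lists AA"
        using wT w'T lists_take by (auto simp: Lq_def)
      have "foldl \<delta> q0 (take i w') \<in> Gd" using that(2) RegFS_iff[OF tA(2)] by blast
      then have "foldl \<delta> q0 (take i w) \<in> Gd" using nb w'T that(1) unfolding bad_def by blast
      then show ?thesis using RegFS_iff[OF tA(1)] by blast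
    qed
    then show ?thesis unfolding preceq_def using wT w'T by auto
  qed
  ultimately show "w \<in> minsync Sig Gam (Lq q0) (Lq q0)" unfolding minsync_def using wT by blast
qed

lemma minsync_eq: "minsync Sig Gam (Lq q0) (Lq q0) = Lq q0 - CC"
proof (intro set_eqI iffI)
  fix w assume w: "w \<in> minsync Sig Gam (Lq q0) (Lq q0)"
  then have wT: "w \<in> Lq q0" unfolding minsync_def by blast
  then have "\<not> bad w" using minsync_char w by blast
  then have "w \<notin> CC" using CC_sound by blast
  then show "w \<in> Lq q0 - CC" using wT by blast
next
  fix w assume w: "w \<in> Lq q0 - CC"
  then have "\<not> bad w" using CC_complete by blast
  then show "w \<in> minsync Sig Gam (Lq q0) (Lq q0)" using minsync_char w by blast
qed

lemma reg_minsync: "regular_lang AA (minsync Sig Gam (Lq q0) (Lq q0))"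
proof -
  have "reg AA (Lq q0 - CC)" by (rule reg_Diff[OF reg_Lq[OF q0Q] reg_CC])
  then show ?thesis unfolding minsync_eq using reg_regular finSig finGam by blast
qed

end

theorem mainTheorem13:
  fixes Sig Gam :: "'a set" and T :: "'a list set"
  assumes "finite Sig" and "finite Gam" and "Sig \<inter> Gam = {}"
    and "regular_lang (Sig \<union> Gam) T"
    and "finite_shiftlag Sig Gam T"
  shows "regular_lang (Sig \<union> Gam) (minsync Sig Gam T T)"
proof -
  obtain Q q0 \<delta> F where d: "T \<subseteq> lists (Sig \<union> Gam)" "finite (Q::nat set)" "q0 \<in> Q"
    "\<forall>q\<in>Q. \<forall>a\<in>Sig \<union> Gam. \<delta> q a \<in> Q" "F \<subseteq> Q"
    "\<forall>w\<in>lists (Sig \<union> Gam). w \<in> T \<longleftrightarrow> foldl \<delta> q0 w \<in> F"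
    using assms(4) unfolding regular_lang_def by blast
  obtain K where K: "\<And>w. w \<in> T \<Longrightarrow> shiftlag Sig Gam w \<le> K"
    using assms(5) unfolding finite_shiftlag_def bdd_above_def by blast
  have Teq: "T = {w \<in> lists (Sig \<union> Gam). foldl \<delta> q0 w \<in> F}"
  proof (intro set_eqI iffI)
    fix w assume "w \<in> T" then show "w \<in> {w \<in> lists (Sig \<union> Gam). foldl \<delta> q0 w \<in> F}" using d(1,6) by blast
  next
    fix w assume "w \<in> {w \<in> lists (Sig \<union> Gam). foldl \<delta> q0 w \<in> F}" then show "w \<in> T" using d(6) by blast
  qed
  interpret setting Sig Gam Q q0 \<delta> F K
  proof
    show "finite Sig" "finite Gam" "Sig \<inter> Gam = {}" by (fact assms(1,2,3))+
    show "finite Q" "q0 \<in> Q" "\<forall>q\<in>Q. \<forall>a\<in>Sig \<union> Gam. \<delta> q a \<in> Q" "F \<subseteq> Q" by (fact d(2,3,4,5))+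
    fix w assume "w \<in> lists (Sig \<union> Gam)" "foldl \<delta> q0 w \<in> F"
    then have "w \<in> T" using Teq by blast
    then show "shiftlag Sig Gam w \<le> K" by (rule K)
  qed
  have "T = Lq q0" unfolding Lq_def Teq ..
  then show ?thesis using reg_minsync by simp
qed

end
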